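(* For $n,m\ge2$ and $k\ge1$, let $X^{n,m}_k$ be the set of $p\in([0,1]\cap\mathbb Q)^{n^2m^2}$ for which there exists a $k$-approximate trace $\tau:\mathbb F(n,m)\to\mathbb D\cap\mathbb Q(i)$ that is $k$-adapted to $p$. Then each $X^{n,m}_k$ is recursively enumerable, uniformly in $k$, $n$ and $m$.
   Context: $\mathbb D$ is the closed unit disc in $\mathbb C$, $[n]=\{1,\dots,n\}$. $\mathbb F(n,m)$ is the free product of $n$ cyclic groups of order $m$, with generators $u_1,\dots,u_n$ and a fixed effective enumeration of its elements. Functions $\tau:\mathbb F(n,m)\to\mathbb D$ are extended linearly to $\mathbb Q(i)\mathbb F(n,m)$. Approximate traces: fix an effective enumeration $(R_l)_{l\ge1}$ (independent of the group, via a fixed coding of $\mathbb Q(i)$ and of indices into the enumeration of the group $G$) of all requirements of the forms "$\sum_{\lambda,\gamma}\overline{a_\lambda}a_\gamma\tau(\lambda^{-1}\gamma)\ge0$" for $\sum a_\lambda u_\lambda\in\mathbb Q(i)G$ and "$\tau(\gamma^{-1}\lambda\gamma)=\tau(\lambda)$" for $\lambda,\gamma\in G$. For $k\ge1$, the relaxation $R^k_l$ of the first kind says $\sum\overline{a_\lambda}a_\gamma\tau(\lambda^{-1}\gamma)$ is within $1/k$ of the nonnegative real axis, and of the second kind says $|\tau(\gamma^{-1}\lambda\gamma)-\tau(\lambda)|<1/k$. A function $\tau:G\to\mathbb D$ is a $k$-approximate trace on $G$ if $R^k_1,\dots,R^k_k$ hold. Adaptedness: in $C^*(\mathbb F(n,m))$,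 $e^{n,m}_{v,i}$ is the spectral projection of $u_v$ for eigenvalue $\xi_m^i$ ($\xi_m$ a primitive $m$-th root of unity). Fix a computable function $(v,w,i,j,k,n,m)\mapsto s^{n,m}_{v,w,i,j,k}\in\mathbb Q(i)\mathbb F(n,m)$ with $\|e^{n,m}_{v,i}e^{n,m}_{w,j}-s^{n,m}_{v,w,i,j,k}\|<1/k$ in $C^*(\mathbb F(n,m))$. A function $\tau:\mathbb F(n,m)\to\mathbb D$ is $k$-adapted to $p\in[0,1]^{n^2m^2}$ if $|p(i,j|v,w)-\tau(s^{n,m}_{v,w,i,j,k})|<1/k$ for all $v,w\in[n]$, $i,j\in[m]$. *)

theory Defs
  imports Complex_Main "HOL-Library.Nat_Bijection"
begin

datatype recf = RZero | RSucc | RProj nat | RComp recf "recf list" | RPrec recf recf | RMinim recf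

inductive evalr :: "recf \<Rightarrow> nat list \<Rightarrow> nat \<Rightarrow> bool" where
  ev_zero: "evalr RZero xs 0"
| ev_succ: "evalr RSucc (x # xs) (Suc x)"
| ev_proj: "i < length xs \<Longrightarrow> evalr (RProj i) xs (xs ! i)"
| ev_comp: "list_all2 (\<lambda>g y. evalr g xs y) gs ys \<Longrightarrow> evalr f ys z \<Longrightarrow> evalr (RComp f gs) xs z"
| ev_prec0: "evalr f xs z \<Longrightarrow> evalr (RPrec f g) (0 # xs) z"
| ev_precS: "evalr (RPrec f g) (n # xs) y \<Longrightarrow> evalr g (y # n # xs) z
             \<Longrightarrow> evalr (RPrec f g) (Suc n # xs) z"
| ev_minim: "evalr f (y # xs) 0 \<Longrightarrow> (\<forall>z<y. \<exists>v. evalr f (z # xs) (Suc v))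
             \<Longrightarrow> evalr (RMinim f) xs y"

definition computable :: "(nat \<Rightarrow> nat) \<Rightarrow> bool" where
  "computable g \<longleftrightarrow> (\<exists>f. \<forall>x. evalr f [x] (g x))"

definition re_set :: "nat set \<Rightarrow> bool" where
  "re_set A \<longleftrightarrow> (\<exists>f. \<forall>x. x \<in> A \<longleftrightarrow> (\<exists>y. evalr f [x] y))"

definition rat_code :: "rat \<Rightarrow> nat" where
  "rat_code q = (case quotient_of q of (a, b) \<Rightarrow> prod_encode (int_encode a, int_encode b))"

type_synonym gq = "rat \<times> rat"

definition gq_val :: "gq \<Rightarrow> complex" where
  "gq_val c = Complex (of_rat (fst c)) (of_rat (snd c))"

definition gq_code :: "gq \<Rightarrow> nat" where
  "gq_code c = prod_encode (rat_code (fst c), rat_code (snd c))"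

section \<open>The free product F(n,m) of n cyclic groups of order m (reduced words)\<close>

text \<open>A letter (v,e) stands for u_v^e, with 1 \<le> v \<le> n and 0 < e < m.\<close>
type_synonym fword = "(nat \<times> nat) list"

definition fp_carrier :: "nat \<Rightarrow> nat \<Rightarrow> fword set" where
  "fp_carrier n m = {w. (\<forall>(v, e) \<in> set w. 1 \<le> v \<and> v \<le> n \<and> 0 < e \<and> e < m)
                       \<and> (\<forall>i. Suc i < length w \<longrightarrow> fst (w ! i) \<noteq> fst (w ! Suc i))}"

fun fp_push :: "nat \<Rightarrow> nat \<times> nat \<Rightarrow> fword \<Rightarrow> fword" where
  "fp_push m (v, e) [] = [(v, e)]"
| "fp_push m (v, e) ((w, f) # ws) =
     (if v = w then (if (e + f) mod m = 0 then ws else (v, (e + f) mod m) # ws)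
      else (v, e) # (w, f) # ws)"

definition fp_mult :: "nat \<Rightarrow> fword \<Rightarrow> fword \<Rightarrow> fword" where
  "fp_mult m x y = foldr (fp_push m) x y"

definition fp_inv :: "nat \<Rightarrow> fword \<Rightarrow> fword" where
  "fp_inv m x = rev (map (\<lambda>(v, e). (v, m - e)) x)"

definition fp_genpow :: "nat \<Rightarrow> nat \<Rightarrow> nat \<Rightarrow> fword" where
  "fp_genpow m v t = (if t mod m = 0 then [] else [(v, t mod m)])"

definition word_code :: "fword \<Rightarrow> nat" where
  "word_code w = list_encode (map prod_encode w)"

section \<open>Complex group algebra of F(n,m): formal finite sums\<close>

type_synonym fgr = "(complex \<times> fword) list"

definition fgr_mult :: "nat \<Rightarrow> fgr \<Rightarrow> fgr \<Rightarrow> fgr" where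
  "fgr_mult m x y = concat (map (\<lambda>(a, g). map (\<lambda>(b, h). (a * b, fp_mult m g h)) y) x)"

definition fgr_star :: "nat \<Rightarrow> fgr \<Rightarrow> fgr" where
  "fgr_star m x = map (\<lambda>(a, g). (cnj a, fp_inv m g)) x"

definition fgr_diff :: "fgr \<Rightarrow> fgr \<Rightarrow> fgr" where
  "fgr_diff x y = x @ map (\<lambda>(b, h). (- b, h)) y"

definition fgr_eval :: "(fword \<Rightarrow> complex) \<Rightarrow> fgr \<Rightarrow> complex" where
  "fgr_eval \<tau> x = (\<Sum>(a, g) \<leftarrow> x. a * \<tau> g)"

text \<open>Normalised positive definite functions on F(n,m), i.e. the states of C*(F(n,m)).\<close>
definition pd_state :: "nat \<Rightarrow> nat \<Rightarrow> (fword \<Rightarrow> complex) \<Rightarrow> bool" where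
  "pd_state n m \<phi> \<longleftrightarrow> \<phi> [] = 1 \<and>
     (\<forall>x. set (map snd x) \<subseteq> fp_carrier n m \<longrightarrow>
        Im (fgr_eval \<phi> (fgr_mult m (fgr_star m x) x)) = 0 \<and>
        Re (fgr_eval \<phi> (fgr_mult m (fgr_star m x) x)) \<ge> 0)"

text \<open>Norm in the full group C*-algebra: ||x||^2 = sup over states phi of phi(x* x).\<close>
definition cstar_norm :: "nat \<Rightarrow> nat \<Rightarrow> fgr \<Rightarrow> real" where
  "cstar_norm n m x = sqrt (Sup {Re (fgr_eval \<phi> (fgr_mult m (fgr_star m x) x)) | \<phi>. pd_state n m \<phi>})"

text \<open>Primitive m-th root of unity xi_m = exp(2 pi i/m); spectral projection of u_v
  for the eigenvalue xi_m^i: e_{v,i} = (1/m) sum_{t<m} xi_m^{-it} u_v^t.\<close>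
definition spec_proj :: "nat \<Rightarrow> nat \<Rightarrow> nat \<Rightarrow> fgr" where
  "spec_proj m v i = map (\<lambda>t. (cis (- 2 * pi * real i * real t / real m) / of_nat m, fp_genpow m v t)) [0..<m]"

text \<open>An element of Q(i)G is a list of pairs (coefficient, index into the enumeration E of G).\<close>
type_synonym qelt = "(gq \<times> nat) list"

definition qelt_val :: "(nat \<Rightarrow> fword) \<Rightarrow> qelt \<Rightarrow> fgr" where
  "qelt_val En x = map (\<lambda>(c, l). (gq_val c, En l)) x"

definition qelt_code :: "qelt \<Rightarrow> nat" where
  "qelt_code x = list_encode (map (\<lambda>(c, l). prod_encode (gq_code c, l)) x)"

text \<open>PosReq a: sum_{lambda,gamma} conj(a_lambda) a_gamma tau(lambda^-1 gamma) \<ge> 0;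
  ConjReq lambda gamma: tau(gamma^-1 lambda gamma) = tau(lambda) (indices into the enumeration).\<close>
datatype req = PosReq qelt | ConjReq nat nat

definition req_code :: "req \<Rightarrow> nat" where
  "req_code r = (case r of PosReq x \<Rightarrow> prod_encode (0, qelt_code x)
                          | ConjReq a b \<Rightarrow> prod_encode (1, prod_encode (a, b)))"

definition req_relax :: "nat \<Rightarrow> nat \<Rightarrow> (nat \<Rightarrow> fword) \<Rightarrow> (fword \<Rightarrow> complex) \<Rightarrow> req \<Rightarrow> bool" where
  "req_relax k m En \<tau> r = (case r of
      PosReq x \<Rightarrow> (\<exists>t::real. t \<ge> 0 \<and>
          cmod (fgr_eval \<tau> (fgr_mult m (fgr_star m (qelt_val En x)) (qelt_val En x)) - of_real t) < 1 / real k)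
    | ConjReq a b \<Rightarrow>
          cmod (\<tau> (fp_mult m (fp_mult m (fp_inv m (En b)) (En a)) (En b)) - \<tau> (En a)) < 1 / real k)"

definition approx_trace :: "nat \<Rightarrow> nat \<Rightarrow> nat \<Rightarrow> (nat \<Rightarrow> nat \<Rightarrow> nat \<Rightarrow> fword) \<Rightarrow> (nat \<Rightarrow> req)
                             \<Rightarrow> (fword \<Rightarrow> complex) \<Rightarrow> bool" where
  "approx_trace k n m E R \<tau> \<longleftrightarrow> (\<forall>g \<in> fp_carrier n m. cmod (\<tau> g) \<le> 1) \<and>
      (\<forall>l \<in> {1..k}. req_relax k m (E n m) \<tau> (R l))"

text \<open>p(i,j|v,w) is written p i j v w.\<close>
type_synonym corr = "nat \<Rightarrow> nat \<Rightarrow> nat \<Rightarrow> nat \<Rightarrow> rat"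

definition adapted :: "nat \<Rightarrow> nat \<Rightarrow> nat \<Rightarrow> (nat \<Rightarrow> nat \<Rightarrow> nat \<Rightarrow> fword)
      \<Rightarrow> (nat \<Rightarrow> nat \<Rightarrow> nat \<Rightarrow> nat \<Rightarrow> nat \<Rightarrow> nat \<Rightarrow> nat \<Rightarrow> qelt) \<Rightarrow> corr \<Rightarrow> (fword \<Rightarrow> complex) \<Rightarrow> bool" where
  "adapted k n m E S p \<tau> \<longleftrightarrow>
     (\<forall>v \<in> {1..n}. \<forall>w \<in> {1..n}. \<forall>i \<in> {1..m}. \<forall>j \<in> {1..m}.
        cmod (of_real (of_rat (p i j v w)) - fgr_eval \<tau> (qelt_val (E n m) (S v w i j k n m))) < 1 / real k)"

definition Xset :: "nat \<Rightarrow> nat \<Rightarrow> nat \<Rightarrow> (nat \<Rightarrow> nat \<Rightarrow> nat \<Rightarrow> fword) \<Rightarrow> (nat \<Rightarrow> req)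
      \<Rightarrow> (nat \<Rightarrow> nat \<Rightarrow> nat \<Rightarrow> nat \<Rightarrow> nat \<Rightarrow> nat \<Rightarrow> nat \<Rightarrow> qelt) \<Rightarrow> corr set" where
  "Xset k n m E R S = {p.
     (\<forall>v \<in> {1..n}. \<forall>w \<in> {1..n}. \<forall>i \<in> {1..m}. \<forall>j \<in> {1..m}. 0 \<le> p i j v w \<and> p i j v w \<le> 1) \<and>
     (\<exists>\<tau>. approx_trace k n m E R \<tau> \<and>
          (\<forall>g \<in> fp_carrier n m. Re (\<tau> g) \<in> \<rat> \<and> Im (\<tau> g) \<in> \<rat>) \<and>
          adapted k n m E S p \<tau>)}"

definition corr_list :: "nat \<Rightarrow> nat \<Rightarrow> corr \<Rightarrow> rat list" where
  "corr_list n m p = [p i j v w. v \<leftarrow> [1..<n+1], w \<leftarrow> [1..<n+1], i \<leftarrow> [1..<m+1], j \<leftarrow> [1..<m+1]]"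

definition kmnp_code :: "nat \<Rightarrow> nat \<Rightarrow> nat \<Rightarrow> corr \<Rightarrow> nat" where
  "kmnp_code k n m p = list_encode [k, n, m, list_encode (map rat_code (corr_list n m p))]"

text \<open>All X^{n,m}_k at once, as a set of codes of tuples (k,n,m,p).\<close>
definition Xcodes :: "(nat \<Rightarrow> nat \<Rightarrow> nat \<Rightarrow> fword) \<Rightarrow> (nat \<Rightarrow> req)
      \<Rightarrow> (nat \<Rightarrow> nat \<Rightarrow> nat \<Rightarrow> nat \<Rightarrow> nat \<Rightarrow> nat \<Rightarrow> nat \<Rightarrow> qelt) \<Rightarrow> nat set" where
  "Xcodes E R S = {kmnp_code k n m p | k n m p.
       2 \<le> n \<and> 2 \<le> m \<and> 1 \<le> k \<and> p \<in> Xset k n m E R S}"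

end

theory Submission
  imports Defs
begin

inductive_cases ev_RZeroE: "evalr RZero xs y"
inductive_cases ev_RSuccE: "evalr RSucc xs y"
inductive_cases ev_RProjE: "evalr (RProj i) xs y"
inductive_cases ev_RCompE: "evalr (RComp f gs) xs y"
inductive_cases ev_RPrecE: "evalr (RPrec f g) xs y"
inductive_cases ev_RMinimE: "evalr (RMinim f) xs y"

lemma list_all2_det:
  assumes "list_all2 (\<lambda>g y. evalr g xs y \<and> (\<forall>y'. evalr g xs y' \<longrightarrow> y = y')) gs ys"
    and "list_all2 (\<lambda>g y. evalr g xs y) gs ys'"
  shows "ys = ys'"
  using assms
proof (induction gs arbitrary: ys ys')
  case Nil then show ?case by simp
next
  case (Cons g gs)
  from Cons.prems(1) obtain y ys1 where a: "ys = y # ys1" "evalr g xs y" "\<forall>y'. evalr g xs y' \<longrightarrow> y = y'"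
    "list_all2 (\<lambda>g y. evalr g xs y \<and> (\<forall>y'. evalr g xs y' \<longrightarrow> y = y')) gs ys1"
    unfolding list_all2_Cons1 by blast
  from Cons.prems(2) obtain y' ys2 where b: "ys' = y' # ys2" "evalr g xs y'"
    "list_all2 (\<lambda>g y. evalr g xs y) gs ys2"
    unfolding list_all2_Cons1 by blast
  have "y = y'" using a(3) b(2) by blast
  moreover have "ys1 = ys2" using Cons.IH[OF a(4) b(3)] .
  ultimately show ?case using a(1) b(1) by simp
qed

lemma evalr_det: "evalr f xs y \<Longrightarrow> evalr f xs y' \<Longrightarrow> y = y'"
proof (induction arbitrary: y' rule: evalr.induct)
  case (ev_zero xs) from ev_zero.prems show ?case by (rule ev_RZeroE) simp
next
  case (ev_succ x xs) from ev_succ.prems show ?case by (rule ev_RSuccE) simp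
next
  case (ev_proj i xs) from ev_proj.prems show ?case by (rule ev_RProjE) simp
next
  case (ev_comp xs gs ys f z)
  from ev_comp.prems obtain ys' where a: "list_all2 (\<lambda>g y. evalr g xs y) gs ys'" and b: "evalr f ys' y'"
    by (rule ev_RCompE) blast
  have "ys = ys'" by (rule list_all2_det[OF ev_comp.IH(1) a])
  then show ?case using ev_comp.IH(2) b by blast
next
  case (ev_prec0 f xs z g)
  from ev_prec0.prems have "evalr f xs y'"
    by (rule ev_RPrecE) auto
  then show ?case using ev_prec0.IH by blast
next
  case (ev_precS f g n xs y z)
  from ev_precS.prems obtain y2 where a: "evalr (RPrec f g) (n # xs) y2" and b: "evalr g (y2 # n # xs) y'"
    by (rule ev_RPrecE) auto
  from ev_precS.IH(1)[OF a] have "y = y2" .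
  with b ev_precS.IH(2) show ?case by blast
next
  case (ev_minim f y xs)
  from ev_minim.prems have a: "evalr f (y' # xs) 0" and b: "\<forall>z<y'. \<exists>v. evalr f (z # xs) (Suc v)"
    by (rule ev_RMinimE, blast)+
  show ?case
  proof (rule ccontr)
    assume "y \<noteq> y'"
    then consider "y < y'" | "y' < y" by linarith
    then show False
    proof cases
      case 1
      then obtain v where "evalr f (y # xs) (Suc v)" using b by blast
      then have "0 = Suc v" by (rule ev_minim.IH(1))
      then show False by simp
    next
      case 2
      then obtain v where v1: "evalr f (y' # xs) (Suc v)" and v2: "\<forall>y''. evalr f (y' # xs) y'' \<longrightarrow> Suc v = y''"
        using ev_minim.IH(2) by blast
      from v2 a show False by blast
    qed
  qed
qed
section \<open>Computable functions of fixed arity\<close>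

definition rc :: "nat \<Rightarrow> (nat list \<Rightarrow> nat) \<Rightarrow> bool" where
  "rc k f \<longleftrightarrow> (\<exists>r. \<forall>xs. length xs = k \<longrightarrow> evalr r xs (f xs))"

definition rp :: "nat \<Rightarrow> (nat list \<Rightarrow> bool) \<Rightarrow> bool" where
  "rp k P \<longleftrightarrow> rc k (\<lambda>xs. if P xs then 1 else 0)"

named_theorems rci

lemma rc_cong: "rc k f \<Longrightarrow> (\<And>xs. length xs = k \<Longrightarrow> f xs = g xs) \<Longrightarrow> rc k g"
  unfolding rc_def by metis

lemma rp_cong: "rp k P \<Longrightarrow> (\<And>xs. length xs = k \<Longrightarrow> P xs = Q xs) \<Longrightarrow> rp k Q"
  unfolding rp_def by (erule rc_cong) simp

lemma rc_const[rci]: "rc k (\<lambda>xs. c)"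
proof (induction c)
  case 0 show ?case unfolding rc_def by (metis ev_zero)
next
  case (Suc c)
  then obtain r where r: "\<forall>xs. length xs = k \<longrightarrow> evalr r xs c" unfolding rc_def by blast
  show ?case unfolding rc_def
  proof (rule exI[of _ "RComp RSucc [r]"], intro allI impI)
    fix xs :: "nat list" assume "length xs = k"
    then show "evalr (RComp RSucc [r]) xs (Suc c)"
      using r by (auto intro!: ev_comp[of _ _ "[c]"] ev_succ)
  qed
qed

lemma rc_proj[rci]: "i < k \<Longrightarrow> rc k (\<lambda>xs. xs ! i)"
  unfolding rc_def by (rule exI[of _ "RProj i"]) (auto intro: ev_proj)

lemma rc_Suc[rci]: "rc k a \<Longrightarrow> rc k (\<lambda>xs. Suc (a xs))"
  unfolding rc_def
  by (erule exE, rule_tac x="RComp RSucc [r]" in exI) (auto intro!: ev_comp[of _ _ "[_]"] ev_succ)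

lemma rc_list:
  "(\<forall>g\<in>set gs. rc k g) \<Longrightarrow> \<exists>rs. \<forall>xs. length xs = k \<longrightarrow> list_all2 (\<lambda>r y. evalr r xs y) rs (map (\<lambda>g. g xs) gs)"
proof (induction gs)
  case Nil then show ?case by simp
next
  case (Cons g gs)
  then obtain rs where rs: "\<forall>xs. length xs = k \<longrightarrow> list_all2 (\<lambda>r y. evalr r xs y) rs (map (\<lambda>g. g xs) gs)"
    by auto
  from Cons.prems obtain r where r: "\<forall>xs. length xs = k \<longrightarrow> evalr r xs (g xs)" unfolding rc_def by auto
  show ?case by (rule exI[of _ "r # rs"]) (simp add: r rs)
qed

lemma rc_comp: "rc (length gs) h \<Longrightarrow> \<forall>g\<in>set gs. rc k g \<Longrightarrow> rc k (\<lambda>xs. h (map (\<lambda>g. g xs) gs))"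
proof -
  assume h: "rc (length gs) h" and g: "\<forall>g\<in>set gs. rc k g"
  from h obtain rh where rh: "\<forall>xs. length xs = length gs \<longrightarrow> evalr rh xs (h xs)" unfolding rc_def by auto
  from rc_list[OF g] obtain rs where rs: "\<forall>xs. length xs = k \<longrightarrow> list_all2 (\<lambda>r y. evalr r xs y) rs (map (\<lambda>g. g xs) gs)"
    by auto
  show ?thesis unfolding rc_def
  proof (rule exI[of _ "RComp rh rs"], intro allI impI)
    fix xs :: "nat list" assume "length xs = k"
    then show "evalr (RComp rh rs) xs (h (map (\<lambda>g. g xs) gs))"
      using rs rh by (auto intro!: ev_comp[of _ _ "map (\<lambda>g. g xs) gs"])
  qed
qed

lemma rc_comp1: "rc 1 (\<lambda>ys. h (ys!0)) \<Longrightarrow> rc k a \<Longrightarrow> rc k (\<lambda>xs. h (a xs))"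
  using rc_comp[of "[a]" "\<lambda>ys. h (ys!0)" k] by simp

lemma rc_comp2: "rc 2 (\<lambda>ys. h (ys!0) (ys!1)) \<Longrightarrow> rc k a \<Longrightarrow> rc k b \<Longrightarrow> rc k (\<lambda>xs. h (a xs) (b xs))"
  using rc_comp[of "[a, b]" "\<lambda>ys. h (ys!0) (ys!1)" k] by (simp add: numeral_2_eq_2)

lemma rc_comp3: "rc 3 (\<lambda>ys. h (ys!0) (ys!1) (ys!2)) \<Longrightarrow> rc k a \<Longrightarrow> rc k b \<Longrightarrow> rc k c
   \<Longrightarrow> rc k (\<lambda>xs. h (a xs) (b xs) (c xs))"
  using rc_comp[of "[a, b, c]" "\<lambda>ys. h (ys!0) (ys!1) (ys!2)" k] by (simp add: numeral_3_eq_3)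

lemma rc_comp4: "rc 4 (\<lambda>ys. h (ys!0) (ys!1) (ys!2) (ys!3)) \<Longrightarrow> rc k a \<Longrightarrow> rc k b \<Longrightarrow> rc k c \<Longrightarrow> rc k d
   \<Longrightarrow> rc k (\<lambda>xs. h (a xs) (b xs) (c xs) (d xs))"
  using rc_comp[of "[a, b, c, d]" "\<lambda>ys. h (ys!0) (ys!1) (ys!2) (ys!3)" k]
  by (simp add: eval_nat_numeral)

primrec natrec :: "nat \<Rightarrow> (nat \<Rightarrow> nat \<Rightarrow> nat) \<Rightarrow> nat \<Rightarrow> nat" where
  "natrec b s 0 = b"
| "natrec b s (Suc n) = s n (natrec b s n)"

lemma rc_prec:
  assumes "rc k b" "rc (Suc (Suc k)) (\<lambda>ys. s (ys!1) (ys!0) (drop 2 ys))"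
  shows "rc (Suc k) (\<lambda>ys. natrec (b (tl ys)) (\<lambda>n r. s n r (tl ys)) (ys!0))"
proof -
  from assms obtain rb rs where rb: "\<forall>xs. length xs = k \<longrightarrow> evalr rb xs (b xs)"
    and rs: "\<forall>ys. length ys = Suc (Suc k) \<longrightarrow> evalr rs ys (s (ys!1) (ys!0) (drop 2 ys))"
    unfolding rc_def by blast
  have *: "evalr (RPrec rb rs) (n # xs) (natrec (b xs) (\<lambda>n r. s n r xs) n)" if "length xs = k" for n xs
  proof (induction n)
    case 0 then show ?case using rb that by (auto intro: ev_prec0)
  next
    case (Suc n)
    have "evalr rs (natrec (b xs) (\<lambda>n r. s n r xs) n # n # xs) (s n (natrec (b xs) (\<lambda>n r. s n r xs) n) xs)"
      using rs[rule_format, of "natrec (b xs) (\<lambda>n r. s n r xs) n # n # xs"] that by simp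
    then show ?case using Suc by (auto intro: ev_precS)
  qed
  show ?thesis unfolding rc_def
    by (rule exI[of _ "RPrec rb rs"]) (auto simp: length_Suc_conv intro: *)
qed

lemma map_nth_all: "map ((!) xs) [0..<length xs] = xs"
  by (rule map_nth)

lemma rc_natrec[rci]:
  assumes "rc k b" "rc (Suc (Suc k)) (\<lambda>ys. s (ys!1) (ys!0) (drop 2 ys))" "rc k c"
  shows "rc k (\<lambda>xs. natrec (b xs) (\<lambda>n r. s n r xs) (c xs))"
proof -
  let ?gs = "c # map (\<lambda>i xs. xs ! i) [0..<k]"
  have "rc k (\<lambda>xs. (\<lambda>ys. natrec (b (tl ys)) (\<lambda>n r. s n r (tl ys)) (ys!0)) (map (\<lambda>g. g xs) ?gs))"
    by (rule rc_comp) (use rc_prec[OF assms(1,2)] assms(3) rc_proj in auto)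
  then show ?thesis
  proof (rule rc_cong)
    fix xs :: "nat list" assume "length xs = k"
    then have "map (\<lambda>g. g xs) (map (\<lambda>i xs. xs ! i) [0..<k]) = xs"
      using map_nth[of xs] by (simp add: comp_def)
    then show "(\<lambda>ys. natrec (b (tl ys)) (\<lambda>n r. s n r (tl ys)) (ys!0)) (map (\<lambda>g. g xs) ?gs)
       = natrec (b xs) (\<lambda>n r. s n r xs) (c xs)" by simp
  qed
qed

lemma rc_dproj[rci]: "i + j < k \<Longrightarrow> rc k (\<lambda>xs. drop j xs ! i)"
  by (rule rc_cong[OF rc_proj[of "j+i"]]) auto

lemma rc_dproj2[rci]: "i + j + j' < k \<Longrightarrow> rc k (\<lambda>xs. drop j (drop j' xs) ! i)"
  by (rule rc_cong[OF rc_proj[of "j'+j+i"]]) (auto simp: ac_simps)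

lemma rc_dproj3[rci]: "i + j + j' + j'' < k \<Longrightarrow> rc k (\<lambda>xs. drop j (drop j' (drop j'' xs)) ! i)"
  by (rule rc_cong[OF rc_proj[of "j''+j'+j+i"]]) (auto simp: ac_simps)

lemma rc_dproj4[rci]: "i + j + j' + j'' + j''' < k \<Longrightarrow> rc k (\<lambda>xs. drop j (drop j' (drop j'' (drop j''' xs))) ! i)"
  by (rule rc_cong[OF rc_proj[of "j'''+j''+j'+j+i"]]) (auto simp: ac_simps)



section \<open>Arithmetic\<close>

lemma natrec_add: "natrec x (\<lambda>n r. Suc r) y = x + y" by (induction y) auto
lemma natrec_pred: "natrec 0 (\<lambda>n r. n) x = x - 1" by (induction x) auto
lemma natrec_sub: "natrec x (\<lambda>n r. r - 1) y = x - y" by (induction y) auto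
lemma natrec_mult: "natrec 0 (\<lambda>n r. r + x) y = x * y" by (induction y) auto
lemma natrec_funpow: "natrec b (\<lambda>n r. g r) n = (g ^^ n) b" by (induction n) auto

lemma rc_add2: "rc 2 (\<lambda>ys. ys!0 + ys!1)"
  apply (rule rc_cong[of _ "\<lambda>xs. natrec (xs!0) (\<lambda>n r. Suc r) (xs!1)"])
  subgoal by (rule rci | simp)+
  by (simp only: natrec_add)

lemma rc_add[rci]: "rc k a \<Longrightarrow> rc k b \<Longrightarrow> rc k (\<lambda>xs. a xs + b xs)"
  by (rule rc_comp2[OF rc_add2])

lemma rc_sub2: "rc 2 (\<lambda>ys. ys!0 - ys!1)"
  apply (rule rc_cong[of _ "\<lambda>xs. natrec (xs!0) (\<lambda>n r. natrec 0 (\<lambda>n' r'. n') r) (xs!1)"])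
  subgoal by (rule rci | simp)+
  by (simp only: natrec_sub natrec_pred)

lemma rc_sub[rci]: "rc k a \<Longrightarrow> rc k b \<Longrightarrow> rc k (\<lambda>xs. a xs - b xs)"
  by (rule rc_comp2[OF rc_sub2])

lemma rc_mult2: "rc 2 (\<lambda>ys. ys!0 * ys!1)"
  apply (rule rc_cong[of _ "\<lambda>xs. natrec 0 (\<lambda>n r. r + xs!0) (xs!1)"])
  subgoal by (rule rci | simp)+
  by (simp only: natrec_mult)

lemma rc_mult[rci]: "rc k a \<Longrightarrow> rc k b \<Longrightarrow> rc k (\<lambda>xs. a xs * b xs)"
  by (rule rc_comp2[OF rc_mult2])

lemma rc_if[rci]: "rp k P \<Longrightarrow> rc k a \<Longrightarrow> rc k b \<Longrightarrow> rc k (\<lambda>xs. if P xs then a xs else b xs)"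
  unfolding rp_def
  apply (rule rc_cong[of _ "\<lambda>xs. (if P xs then 1 else 0) * a xs + (1 - (if P xs then 1 else 0)) * b xs"])
  subgoal by (rule rc_add rc_mult rc_sub rc_const | assumption)+
  by simp

lemma rp_le[rci]: "rc k a \<Longrightarrow> rc k b \<Longrightarrow> rp k (\<lambda>xs. a xs \<le> b xs)"
  unfolding rp_def
  apply (rule rc_cong[of _ "\<lambda>xs. 1 - (a xs - b xs)"])
  subgoal by (rule rc_sub rc_const | assumption)+
  by simp

lemma rp_less[rci]: "rc k a \<Longrightarrow> rc k b \<Longrightarrow> rp k (\<lambda>xs. a xs < b xs)"
  unfolding rp_def
  apply (rule rc_cong[of _ "\<lambda>xs. 1 - (Suc (a xs) - b xs)"])
  subgoal by (rule rc_sub rc_Suc rc_const | assumption)+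
  by simp

lemma rp_conj[rci]: "rp k P \<Longrightarrow> rp k Q \<Longrightarrow> rp k (\<lambda>xs. P xs \<and> Q xs)"
  unfolding rp_def
  apply (rule rc_cong[of _ "\<lambda>xs. (if P xs then 1 else 0) * (if Q xs then 1 else 0)"])
  subgoal by (rule rc_mult | assumption)+
  by simp

lemma rp_not[rci]: "rp k P \<Longrightarrow> rp k (\<lambda>xs. \<not> P xs)"
  unfolding rp_def
  apply (rule rc_cong[of _ "\<lambda>xs. 1 - (if P xs then 1 else 0)"])
  subgoal by (rule rc_sub rc_const | assumption)+
  by simp

lemma rp_disj[rci]: "rp k P \<Longrightarrow> rp k Q \<Longrightarrow> rp k (\<lambda>xs. P xs \<or> Q xs)"
  apply (rule rp_cong[of _ "\<lambda>xs. \<not> (\<not> P xs \<and> \<not> Q xs)"])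
  subgoal by (rule rp_not rp_conj | assumption)+
  by simp

lemma rp_imp[rci]: "rp k P \<Longrightarrow> rp k Q \<Longrightarrow> rp k (\<lambda>xs. P xs \<longrightarrow> Q xs)"
  apply (rule rp_cong[of _ "\<lambda>xs. \<not> (P xs \<and> \<not> Q xs)"])
  subgoal by (rule rp_not rp_conj | assumption)+
  by simp

lemma rp_eq[rci]: "rc k a \<Longrightarrow> rc k b \<Longrightarrow> rp k (\<lambda>xs. a xs = b xs)"
  apply (rule rp_cong[of _ "\<lambda>xs. a xs \<le> b xs \<and> b xs \<le> a xs"])
  subgoal by (rule rp_le rp_conj | assumption)+
  by auto

lemma rp_const[rci]: "rp k (\<lambda>xs. c)"
  unfolding rp_def by (rule rc_const)

definition nall :: "nat \<Rightarrow> (nat \<Rightarrow> bool) \<Rightarrow> bool" where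
  "nall c P \<longleftrightarrow> (\<forall>i<c. P i)"

lemma natrec_nall: "natrec 1 (\<lambda>n r. if r = 1 \<and> P n then 1 else 0) c = (if nall c P then 1 else 0)"
  unfolding nall_def by (induction c) (auto simp: less_Suc_eq)

lemma rp_nall[rci]:
  assumes "rp (Suc (Suc k)) (\<lambda>ys. P (ys!1) (drop 2 ys))" "rc k c"
  shows "rp k (\<lambda>xs. nall (c xs) (\<lambda>i. P i xs))"
  unfolding rp_def
  apply (rule rc_cong[of _ "\<lambda>xs. natrec 1 (\<lambda>n r. if r = 1 \<and> P n xs then 1 else 0) (c xs)"])
  subgoal by (rule rci assms | simp)+
  by (simp only: natrec_nall)


lemma natrec_mod: "natrec 0 (\<lambda>i r. if Suc r = m then 0 else Suc r) x = x mod m"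
  by (induction x) (auto simp: mod_Suc)

lemma rc_mod2: "rc 2 (\<lambda>ys. ys!0 mod ys!1)"
  apply (rule rc_cong[of _ "\<lambda>xs. natrec 0 (\<lambda>i r. if Suc r = xs!1 then 0 else Suc r) (xs!0)"])
  subgoal by (rule rci | simp)+
  by (simp only: natrec_mod)

lemma rc_mod[rci]: "rc k a \<Longrightarrow> rc k b \<Longrightarrow> rc k (\<lambda>xs. a xs mod b xs)"
  by (rule rc_comp2[OF rc_mod2])

lemma natrec_div: "natrec 0 (\<lambda>i r. if Suc (i mod m) = m then Suc r else r) x = x div m"
proof (induction x)
  case 0 then show ?case by simp
next
  case (Suc x)
  have "Suc x mod m = 0 \<longleftrightarrow> Suc (x mod m) = m" by (simp add: mod_Suc)
  then show ?case using Suc by (simp add: div_Suc)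
qed

lemma rc_div2: "rc 2 (\<lambda>ys. ys!0 div ys!1)"
  apply (rule rc_cong[of _ "\<lambda>xs. natrec 0 (\<lambda>i r. if Suc (i mod xs!1) = xs!1 then Suc r else r) (xs!0)"])
  subgoal by (rule rci | simp)+
  by (simp only: natrec_div)

lemma rc_div[rci]: "rc k a \<Longrightarrow> rc k b \<Longrightarrow> rc k (\<lambda>xs. a xs div b xs)"
  by (rule rc_comp2[OF rc_div2])

lemma natrec_tri: "natrec 0 (\<lambda>i r. r + Suc i) n = triangle n"
  by (induction n) auto

lemma rc_tri1: "rc 1 (\<lambda>ys. triangle (ys!0))"
  apply (rule rc_cong[of _ "\<lambda>xs. natrec 0 (\<lambda>i r. r + Suc i) (xs!0)"])
  subgoal by (rule rci | simp)+
  by (simp only: natrec_tri)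

lemma rc_tri[rci]: "rc k a \<Longrightarrow> rc k (\<lambda>xs. triangle (a xs))"
  by (rule rc_comp1[OF rc_tri1])

lemma rc_pe2: "rc 2 (\<lambda>ys. prod_encode (ys!0, ys!1))"
  apply (rule rc_cong[of _ "\<lambda>xs. triangle (xs!0 + xs!1) + xs!0"])
  subgoal by (rule rci | simp)+
  by (simp add: prod_encode_def)

lemma rc_pe[rci]: "rc k a \<Longrightarrow> rc k b \<Longrightarrow> rc k (\<lambda>xs. prod_encode (a xs, b xs))"
  by (rule rc_comp2[OF rc_pe2])

lemma triangle_mono: "m \<le> n \<Longrightarrow> triangle m \<le> triangle n"
  by (induction n rule: dec_induct) auto

lemma le_triangle: "n \<le> triangle n"
  by (induction n) auto

definition sdec :: "nat \<Rightarrow> nat" where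
  "sdec z = natrec 0 (\<lambda>i r. if triangle (Suc i) \<le> z then Suc r else r) z"

lemma sdec_eq: "sdec z = fst (prod_decode z) + snd (prod_decode z)"
proof -
  obtain a b where ab: "prod_decode z = (a, b)" by (cases "prod_decode z")
  then have z: "z = triangle (a + b) + a" using prod_decode_inverse[of z] by (simp add: prod_encode_def)
  let ?s = "a + b"
  have *: "natrec 0 (\<lambda>i r. if triangle (Suc i) \<le> z then Suc r else r) i = min i ?s" for i
  proof (induction i)
    case 0 then show ?case by simp
  next
    case (Suc i)
    show ?case
    proof (cases "Suc i \<le> ?s")
      case True
      then have "triangle (Suc i) \<le> z" using triangle_mono[OF True] z by simp
      then show ?thesis using Suc True by simp
    next
      case False
      then have "triangle (Suc ?s) \<le> triangle (Suc i)" by (intro triangle_mono) simp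
      then have "\<not> triangle (Suc i) \<le> z" using z by simp
      then show ?thesis using Suc False by simp
    qed
  qed
  have "?s \<le> z" using le_triangle[of ?s] z by simp
  then show ?thesis unfolding sdec_def using * ab by simp
qed

lemma fst_pd: "fst (prod_decode z) = z - triangle (sdec z)"
proof -
  obtain a b where ab: "prod_decode z = (a, b)" by (cases "prod_decode z")
  then have z: "z = triangle (a + b) + a" using prod_decode_inverse[of z] by (simp add: prod_encode_def)
  then show ?thesis using ab sdec_eq[of z] by simp
qed

lemma snd_pd: "snd (prod_decode z) = sdec z - (z - triangle (sdec z))"
proof -
  obtain a b where ab: "prod_decode z = (a, b)" by (cases "prod_decode z")
  then have z: "z = triangle (a + b) + a" using prod_decode_inverse[of z] by (simp add: prod_encode_def)
  then show ?thesis using ab sdec_eq[of z] by simp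
qed

lemma rc_sdec1: "rc 1 (\<lambda>ys. sdec (ys!0))"
  unfolding sdec_def by (rule rci | simp)+

lemma rc_sdec[rci]: "rc k a \<Longrightarrow> rc k (\<lambda>xs. sdec (a xs))"
  by (rule rc_comp1[OF rc_sdec1])

lemma rc_fst_pd1: "rc 1 (\<lambda>ys. fst (prod_decode (ys!0)))"
  unfolding fst_pd by (rule rci | simp)+

lemma rc_fst_pd[rci]: "rc k a \<Longrightarrow> rc k (\<lambda>xs. fst (prod_decode (a xs)))"
  by (rule rc_comp1[OF rc_fst_pd1])

lemma rc_snd_pd1: "rc 1 (\<lambda>ys. snd (prod_decode (ys!0)))"
  unfolding snd_pd by (rule rci | simp)+

lemma rc_snd_pd[rci]: "rc k a \<Longrightarrow> rc k (\<lambda>xs. snd (prod_decode (a xs)))"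
  by (rule rc_comp1[OF rc_snd_pd1])


section \<open>Lists\<close>

definition ccons :: "nat \<Rightarrow> nat \<Rightarrow> nat" where "ccons a c = Suc (prod_encode (a, c))"
definition chd :: "nat \<Rightarrow> nat" where "chd c = fst (prod_decode (c - 1))"
definition ctl :: "nat \<Rightarrow> nat" where "ctl c = snd (prod_decode (c - 1))"

lemma chd_Suc[simp]: "chd (Suc (prod_encode (a, c))) = a"
  by (simp add: chd_def)
lemma ctl_Suc[simp]: "ctl (Suc (prod_encode (a, c))) = c"
  by (simp add: ctl_def)
lemma ccons_enc: "ccons a (list_encode xs) = list_encode (a # xs)"
  by (simp add: ccons_def)
lemma chd_enc[simp]: "chd (list_encode (a # xs)) = a"
  by (simp add: chd_def)
lemma ctl_enc[simp]: "ctl (list_encode (a # xs)) = list_encode xs"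
  by (simp add: ctl_def)

lemma rc_ccons[rci]: "rc k a \<Longrightarrow> rc k b \<Longrightarrow> rc k (\<lambda>xs. ccons (a xs) (b xs))"
  unfolding ccons_def by (rule rci | assumption)+
lemma rc_chd[rci]: "rc k a \<Longrightarrow> rc k (\<lambda>xs. chd (a xs))"
  unfolding chd_def by (rule rci | assumption)+
lemma rc_ctl[rci]: "rc k a \<Longrightarrow> rc k (\<lambda>xs. ctl (a xs))"
  unfolding ctl_def by (rule rci | assumption)+

lemma length_list_decode: "length (list_decode c) \<le> c"
proof (induction c rule: list_decode.induct)
  case 1 then show ?case by simp
next
  case (2 n)
  obtain x y where xy: "prod_decode n = (x, y)" by (cases "prod_decode n")
  have "y \<le> n" using le_prod_encode_2[of y x] prod_decode_inverse[of n] xy by simp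
  then show ?case using 2[OF xy[symmetric]] xy by simp
qed

definition lfold :: "(nat \<Rightarrow> nat \<Rightarrow> nat) \<Rightarrow> nat \<Rightarrow> nat \<Rightarrow> nat" where
  "lfold f acc c = foldl (\<lambda>r a. f a r) acc (list_decode c)"

lemma lfold_Nil[simp]: "lfold f acc (list_encode []) = acc"
  by (simp add: lfold_def)
lemma lfold_0[simp]: "lfold f acc 0 = acc"
  by (simp add: lfold_def)
lemma lfold_Cons[simp]: "lfold f acc (list_encode (a # xs)) = lfold f (f a acc) (list_encode xs)"
  by (simp add: lfold_def del: list_encode.simps)

definition lstep :: "(nat \<Rightarrow> nat \<Rightarrow> nat) \<Rightarrow> nat \<Rightarrow> nat" where
  "lstep f s = (if fst (prod_decode s) = 0 then s
     else prod_encode (ctl (fst (prod_decode s)), f (chd (fst (prod_decode s))) (snd (prod_decode s))))"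

lemma lstep_iter: "(lstep f ^^ i) (prod_encode (list_encode xs, acc))
   = prod_encode (list_encode (drop i xs), foldl (\<lambda>r a. f a r) acc (take i xs))"
proof (induction i arbitrary: xs acc)
  case 0 then show ?case by simp
next
  case (Suc i)
  show ?case
  proof (cases xs)
    case Nil
    have "(lstep f ^^ j) (prod_encode (0, acc)) = prod_encode (0, acc)" for j
      by (induction j) (auto simp: lstep_def)
    moreover have "lstep f (prod_encode (0, acc)) = prod_encode (0, acc)" by (simp add: lstep_def)
    ultimately show ?thesis using Nil by (simp only: funpow_Suc_right o_apply) simp
  next
    case (Cons a xs')
    have "lstep f (prod_encode (list_encode xs, acc)) = prod_encode (list_encode xs', f a acc)"
      using Cons by (simp add: lstep_def del: list_encode.simps) (simp)
    then show ?thesis using Suc.IH Cons by (simp only: funpow_Suc_right o_apply) simp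
  qed
qed

lemma lfold_impl: "lfold f acc c = snd (prod_decode (natrec (prod_encode (c, acc)) (\<lambda>n s. lstep f s) c))"
proof -
  have "natrec (prod_encode (c, acc)) (\<lambda>n s. lstep f s) c = (lstep f ^^ c) (prod_encode (list_encode (list_decode c), acc))"
    by (simp add: natrec_funpow)
  also have "\<dots> = prod_encode (list_encode (drop c (list_decode c)), foldl (\<lambda>r a. f a r) acc (take c (list_decode c)))"
    by (rule lstep_iter)
  finally show ?thesis using length_list_decode[of c] by (simp add: lfold_def)
qed

lemma map_nth_drop: "map ((!) ys) [j..<length ys] = drop j ys"
  by (rule nth_equalityI) auto

lemma rc_subst2:
  assumes "rc (Suc (Suc k)) (\<lambda>ys. f (ys!0) (ys!1) (drop 2 ys))" "rc (Suc (Suc k)) g0" "rc (Suc (Suc k)) g1"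
  shows "rc (Suc (Suc k)) (\<lambda>ys. f (g0 ys) (g1 ys) (drop 2 ys))"
proof -
  let ?gs = "g0 # g1 # map (\<lambda>i ys. ys ! i) [2..<Suc (Suc k)]"
  have l: "length ?gs = Suc (Suc k)" by (simp del: upt_Suc)
  have "rc (Suc (Suc k)) (\<lambda>ys. (\<lambda>zs. f (zs!0) (zs!1) (drop 2 zs)) (map (\<lambda>g. g ys) ?gs))"
    by (rule rc_comp) (simp only: l assms(1), use assms(2,3) rc_proj in auto)
  then show ?thesis
  proof (rule rc_cong)
    fix ys :: "nat list" assume l: "length ys = Suc (Suc k)"
    have "map (\<lambda>g. g ys) (map (\<lambda>i ys. ys ! i) [2..<Suc (Suc k)]) = drop 2 ys"
      using map_nth_drop[of ys 2] l by (simp add: comp_def del: upt_Suc)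
    then show "(\<lambda>zs. f (zs!0) (zs!1) (drop 2 zs)) (map (\<lambda>g. g ys) ?gs) = f (g0 ys) (g1 ys) (drop 2 ys)"
      by simp
  qed
qed

lemma rc_lfold[rci]:
  assumes "rc k acc" "rc (Suc (Suc k)) (\<lambda>ys. f (ys!0) (ys!1) (drop 2 ys))" "rc k c"
  shows "rc k (\<lambda>xs. lfold (\<lambda>a r. f a r xs) (acc xs) (c xs))"
  unfolding lfold_impl lstep_def
  by (rule rci assms rc_subst2[OF assms(2)] | simp)+

definition lall :: "(nat \<Rightarrow> bool) \<Rightarrow> nat \<Rightarrow> bool" where
  "lall P c \<longleftrightarrow> (\<forall>a\<in>set (list_decode c). P a)"

lemma foldl_all: "foldl (\<lambda>r a. if r = 1 \<and> P a then 1 else 0) (if b then 1 else 0) xs = (if b \<and> (\<forall>a\<in>set xs. P a) then 1 else (0::nat))"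
  by (induction xs arbitrary: b) auto

lemma lfold_lall: "lfold (\<lambda>a r. if r = 1 \<and> P a then 1 else 0) 1 c = (if lall P c then 1 else 0)"
  unfolding lfold_def lall_def using foldl_all[of P True] by simp

lemma rp_lall[rci]:
  assumes "rp (Suc (Suc k)) (\<lambda>ys. P (ys!0) (drop 2 ys))" "rc k c"
  shows "rp k (\<lambda>xs. lall (\<lambda>a. P a xs) (c xs))"
  unfolding rp_def
  apply (rule rc_cong[of _ "\<lambda>xs. lfold (\<lambda>a r. if r = 1 \<and> P a xs then 1 else 0) 1 (c xs)"])
  subgoal by (rule rci assms | simp)+
  by (simp only: lfold_lall)

definition clen :: "nat \<Rightarrow> nat" where "clen c = lfold (\<lambda>a r. Suc r) 0 c"
lemma clen_enc[simp]: "clen (list_encode xs) = length xs"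
proof -
  have "lfold (\<lambda>a r. Suc r) n (list_encode xs) = n + length xs" for n
    by (induction xs arbitrary: n) (simp_all del: list_encode.simps)
  then show ?thesis by (simp add: clen_def)
qed
lemma rc_clen[rci]: "rc k a \<Longrightarrow> rc k (\<lambda>xs. clen (a xs))"
  unfolding clen_def by (rule rci | simp)+

definition cnth :: "nat \<Rightarrow> nat \<Rightarrow> nat" where "cnth c i = chd (natrec c (\<lambda>n r. ctl r) i)"
lemma cnth_enc[simp]: "i < length xs \<Longrightarrow> cnth (list_encode xs) i = xs ! i"
proof -
  have "natrec (list_encode xs) (\<lambda>n r. ctl r) i = list_encode (drop i xs)" if "i \<le> length xs" for i
    using that
  proof (induction i)
    case 0 then show ?case by simp
  next
    case (Suc i)
    then obtain a ys where "drop i xs = a # ys" by (cases "drop i xs") auto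
    moreover then have "drop (Suc i) xs = ys" by (metis drop_Suc drop_tl list.sel(3))
    ultimately show ?case using Suc by simp
  qed
  moreover assume "i < length xs"
  ultimately show ?thesis unfolding cnth_def by (simp add: Cons_nth_drop_Suc[symmetric])
qed
lemma rc_cnth[rci]: "rc k a \<Longrightarrow> rc k b \<Longrightarrow> rc k (\<lambda>xs. cnth (a xs) (b xs))"
  unfolding cnth_def by (rule rci | simp)+


lemma rp_ifb[rci]: "rp k P \<Longrightarrow> rp k Q \<Longrightarrow> rp k R \<Longrightarrow> rp k (\<lambda>xs. if P xs then Q xs else R xs)"
  apply (rule rp_cong[of _ "\<lambda>xs. (P xs \<and> Q xs) \<or> (\<not> P xs \<and> R xs)"])
  subgoal by (rule rp_disj rp_conj rp_not | assumption)+
  by simp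

lemma rc_comp5: "rc 5 (\<lambda>ys. h (ys!0) (ys!1) (ys!2) (ys!3) (ys!4)) \<Longrightarrow> rc k a0 \<Longrightarrow> rc k a1 \<Longrightarrow> rc k a2 \<Longrightarrow> rc k a3 \<Longrightarrow> rc k a4
   \<Longrightarrow> rc k (\<lambda>xs. h (a0 xs) (a1 xs) (a2 xs) (a3 xs) (a4 xs))"
  using rc_comp[of "[a0, a1, a2, a3, a4]" "\<lambda>ys. h (ys!0) (ys!1) (ys!2) (ys!3) (ys!4)" k]
  by (simp add: eval_nat_numeral)

lemma rc_comp6: "rc 6 (\<lambda>ys. h (ys!0) (ys!1) (ys!2) (ys!3) (ys!4) (ys!5)) \<Longrightarrow> rc k a0 \<Longrightarrow> rc k a1 \<Longrightarrow> rc k a2 \<Longrightarrow> rc k a3 \<Longrightarrow> rc k a4 \<Longrightarrow> rc k a5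
   \<Longrightarrow> rc k (\<lambda>xs. h (a0 xs) (a1 xs) (a2 xs) (a3 xs) (a4 xs) (a5 xs))"
  using rc_comp[of "[a0, a1, a2, a3, a4, a5]" "\<lambda>ys. h (ys!0) (ys!1) (ys!2) (ys!3) (ys!4) (ys!5)" k]
  by (simp add: eval_nat_numeral)

lemma rc_comp7: "rc 7 (\<lambda>ys. h (ys!0) (ys!1) (ys!2) (ys!3) (ys!4) (ys!5) (ys!6)) \<Longrightarrow> rc k a0 \<Longrightarrow> rc k a1 \<Longrightarrow> rc k a2 \<Longrightarrow> rc k a3 \<Longrightarrow> rc k a4 \<Longrightarrow> rc k a5 \<Longrightarrow> rc k a6
   \<Longrightarrow> rc k (\<lambda>xs. h (a0 xs) (a1 xs) (a2 xs) (a3 xs) (a4 xs) (a5 xs) (a6 xs))"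
  using rc_comp[of "[a0, a1, a2, a3, a4, a5, a6]" "\<lambda>ys. h (ys!0) (ys!1) (ys!2) (ys!3) (ys!4) (ys!5) (ys!6)" k]
  by (simp add: eval_nat_numeral)

lemma rc_comp8: "rc 8 (\<lambda>ys. h (ys!0) (ys!1) (ys!2) (ys!3) (ys!4) (ys!5) (ys!6) (ys!7)) \<Longrightarrow> rc k a0 \<Longrightarrow> rc k a1 \<Longrightarrow> rc k a2 \<Longrightarrow> rc k a3 \<Longrightarrow> rc k a4 \<Longrightarrow> rc k a5 \<Longrightarrow> rc k a6 \<Longrightarrow> rc k a7
   \<Longrightarrow> rc k (\<lambda>xs. h (a0 xs) (a1 xs) (a2 xs) (a3 xs) (a4 xs) (a5 xs) (a6 xs) (a7 xs))"
  using rc_comp[of "[a0, a1, a2, a3, a4, a5, a6, a7]" "\<lambda>ys. h (ys!0) (ys!1) (ys!2) (ys!3) (ys!4) (ys!5) (ys!6) (ys!7)" k]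
  by (simp add: eval_nat_numeral)

lemma rc_comp9: "rc 9 (\<lambda>ys. h (ys!0) (ys!1) (ys!2) (ys!3) (ys!4) (ys!5) (ys!6) (ys!7) (ys!8)) \<Longrightarrow> rc k a0 \<Longrightarrow> rc k a1 \<Longrightarrow> rc k a2 \<Longrightarrow> rc k a3 \<Longrightarrow> rc k a4 \<Longrightarrow> rc k a5 \<Longrightarrow> rc k a6 \<Longrightarrow> rc k a7 \<Longrightarrow> rc k a8
   \<Longrightarrow> rc k (\<lambda>xs. h (a0 xs) (a1 xs) (a2 xs) (a3 xs) (a4 xs) (a5 xs) (a6 xs) (a7 xs) (a8 xs))"
  using rc_comp[of "[a0, a1, a2, a3, a4, a5, a6, a7, a8]" "\<lambda>ys. h (ys!0) (ys!1) (ys!2) (ys!3) (ys!4) (ys!5) (ys!6) (ys!7) (ys!8)" k]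
  by (simp add: eval_nat_numeral)

lemma rc_comp10: "rc 10 (\<lambda>ys. h (ys!0) (ys!1) (ys!2) (ys!3) (ys!4) (ys!5) (ys!6) (ys!7) (ys!8) (ys!9)) \<Longrightarrow> rc k a0 \<Longrightarrow> rc k a1 \<Longrightarrow> rc k a2 \<Longrightarrow> rc k a3 \<Longrightarrow> rc k a4 \<Longrightarrow> rc k a5 \<Longrightarrow> rc k a6 \<Longrightarrow> rc k a7 \<Longrightarrow> rc k a8 \<Longrightarrow> rc k a9
   \<Longrightarrow> rc k (\<lambda>xs. h (a0 xs) (a1 xs) (a2 xs) (a3 xs) (a4 xs) (a5 xs) (a6 xs) (a7 xs) (a8 xs) (a9 xs))"
  using rc_comp[of "[a0, a1, a2, a3, a4, a5, a6, a7, a8, a9]" "\<lambda>ys. h (ys!0) (ys!1) (ys!2) (ys!3) (ys!4) (ys!5) (ys!6) (ys!7) (ys!8) (ys!9)" k]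
  by (simp add: eval_nat_numeral)

lemma rc_comp11: "rc 11 (\<lambda>ys. h (ys!0) (ys!1) (ys!2) (ys!3) (ys!4) (ys!5) (ys!6) (ys!7) (ys!8) (ys!9) (ys!10)) \<Longrightarrow> rc k a0 \<Longrightarrow> rc k a1 \<Longrightarrow> rc k a2 \<Longrightarrow> rc k a3 \<Longrightarrow> rc k a4 \<Longrightarrow> rc k a5 \<Longrightarrow> rc k a6 \<Longrightarrow> rc k a7 \<Longrightarrow> rc k a8 \<Longrightarrow> rc k a9 \<Longrightarrow> rc k a10
   \<Longrightarrow> rc k (\<lambda>xs. h (a0 xs) (a1 xs) (a2 xs) (a3 xs) (a4 xs) (a5 xs) (a6 xs) (a7 xs) (a8 xs) (a9 xs) (a10 xs))"
  using rc_comp[of "[a0, a1, a2, a3, a4, a5, a6, a7, a8, a9, a10]" "\<lambda>ys. h (ys!0) (ys!1) (ys!2) (ys!3) (ys!4) (ys!5) (ys!6) (ys!7) (ys!8) (ys!9) (ys!10)" k]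
  by (simp add: eval_nat_numeral)

lemma rp_comp1: "rp 1 (\<lambda>ys. P (ys!0)) \<Longrightarrow> rc k a0
   \<Longrightarrow> rp k (\<lambda>xs. P (a0 xs))"
  unfolding rp_def by (rule rc_comp1[where h="\<lambda>x0. if P x0 then 1 else 0"])

lemma rp_comp2: "rp 2 (\<lambda>ys. P (ys!0) (ys!1)) \<Longrightarrow> rc k a0 \<Longrightarrow> rc k a1
   \<Longrightarrow> rp k (\<lambda>xs. P (a0 xs) (a1 xs))"
  unfolding rp_def by (rule rc_comp2[where h="\<lambda>x0 x1. if P x0 x1 then 1 else 0"])

lemma rp_comp3: "rp 3 (\<lambda>ys. P (ys!0) (ys!1) (ys!2)) \<Longrightarrow> rc k a0 \<Longrightarrow> rc k a1 \<Longrightarrow> rc k a2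
   \<Longrightarrow> rp k (\<lambda>xs. P (a0 xs) (a1 xs) (a2 xs))"
  unfolding rp_def by (rule rc_comp3[where h="\<lambda>x0 x1 x2. if P x0 x1 x2 then 1 else 0"])

lemma rp_comp4: "rp 4 (\<lambda>ys. P (ys!0) (ys!1) (ys!2) (ys!3)) \<Longrightarrow> rc k a0 \<Longrightarrow> rc k a1 \<Longrightarrow> rc k a2 \<Longrightarrow> rc k a3
   \<Longrightarrow> rp k (\<lambda>xs. P (a0 xs) (a1 xs) (a2 xs) (a3 xs))"
  unfolding rp_def by (rule rc_comp4[where h="\<lambda>x0 x1 x2 x3. if P x0 x1 x2 x3 then 1 else 0"])

lemma rp_comp5: "rp 5 (\<lambda>ys. P (ys!0) (ys!1) (ys!2) (ys!3) (ys!4)) \<Longrightarrow> rc k a0 \<Longrightarrow> rc k a1 \<Longrightarrow> rc k a2 \<Longrightarrow> rc k a3 \<Longrightarrow> rc k a4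
   \<Longrightarrow> rp k (\<lambda>xs. P (a0 xs) (a1 xs) (a2 xs) (a3 xs) (a4 xs))"
  unfolding rp_def by (rule rc_comp5[where h="\<lambda>x0 x1 x2 x3 x4. if P x0 x1 x2 x3 x4 then 1 else 0"])

lemma rp_comp6: "rp 6 (\<lambda>ys. P (ys!0) (ys!1) (ys!2) (ys!3) (ys!4) (ys!5)) \<Longrightarrow> rc k a0 \<Longrightarrow> rc k a1 \<Longrightarrow> rc k a2 \<Longrightarrow> rc k a3 \<Longrightarrow> rc k a4 \<Longrightarrow> rc k a5
   \<Longrightarrow> rp k (\<lambda>xs. P (a0 xs) (a1 xs) (a2 xs) (a3 xs) (a4 xs) (a5 xs))"
  unfolding rp_def by (rule rc_comp6[where h="\<lambda>x0 x1 x2 x3 x4 x5. if P x0 x1 x2 x3 x4 x5 then 1 else 0"])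

lemma rp_comp7: "rp 7 (\<lambda>ys. P (ys!0) (ys!1) (ys!2) (ys!3) (ys!4) (ys!5) (ys!6)) \<Longrightarrow> rc k a0 \<Longrightarrow> rc k a1 \<Longrightarrow> rc k a2 \<Longrightarrow> rc k a3 \<Longrightarrow> rc k a4 \<Longrightarrow> rc k a5 \<Longrightarrow> rc k a6
   \<Longrightarrow> rp k (\<lambda>xs. P (a0 xs) (a1 xs) (a2 xs) (a3 xs) (a4 xs) (a5 xs) (a6 xs))"
  unfolding rp_def by (rule rc_comp7[where h="\<lambda>x0 x1 x2 x3 x4 x5 x6. if P x0 x1 x2 x3 x4 x5 x6 then 1 else 0"])

lemma rp_comp8: "rp 8 (\<lambda>ys. P (ys!0) (ys!1) (ys!2) (ys!3) (ys!4) (ys!5) (ys!6) (ys!7)) \<Longrightarrow> rc k a0 \<Longrightarrow> rc k a1 \<Longrightarrow> rc k a2 \<Longrightarrow> rc k a3 \<Longrightarrow> rc k a4 \<Longrightarrow> rc k a5 \<Longrightarrow> rc k a6 \<Longrightarrow> rc k a7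
   \<Longrightarrow> rp k (\<lambda>xs. P (a0 xs) (a1 xs) (a2 xs) (a3 xs) (a4 xs) (a5 xs) (a6 xs) (a7 xs))"
  unfolding rp_def by (rule rc_comp8[where h="\<lambda>x0 x1 x2 x3 x4 x5 x6 x7. if P x0 x1 x2 x3 x4 x5 x6 x7 then 1 else 0"])

lemma rp_comp9: "rp 9 (\<lambda>ys. P (ys!0) (ys!1) (ys!2) (ys!3) (ys!4) (ys!5) (ys!6) (ys!7) (ys!8)) \<Longrightarrow> rc k a0 \<Longrightarrow> rc k a1 \<Longrightarrow> rc k a2 \<Longrightarrow> rc k a3 \<Longrightarrow> rc k a4 \<Longrightarrow> rc k a5 \<Longrightarrow> rc k a6 \<Longrightarrow> rc k a7 \<Longrightarrow> rc k a8
   \<Longrightarrow> rp k (\<lambda>xs. P (a0 xs) (a1 xs) (a2 xs) (a3 xs) (a4 xs) (a5 xs) (a6 xs) (a7 xs) (a8 xs))"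
  unfolding rp_def by (rule rc_comp9[where h="\<lambda>x0 x1 x2 x3 x4 x5 x6 x7 x8. if P x0 x1 x2 x3 x4 x5 x6 x7 x8 then 1 else 0"])

lemma rp_comp10: "rp 10 (\<lambda>ys. P (ys!0) (ys!1) (ys!2) (ys!3) (ys!4) (ys!5) (ys!6) (ys!7) (ys!8) (ys!9)) \<Longrightarrow> rc k a0 \<Longrightarrow> rc k a1 \<Longrightarrow> rc k a2 \<Longrightarrow> rc k a3 \<Longrightarrow> rc k a4 \<Longrightarrow> rc k a5 \<Longrightarrow> rc k a6 \<Longrightarrow> rc k a7 \<Longrightarrow> rc k a8 \<Longrightarrow> rc k a9
   \<Longrightarrow> rp k (\<lambda>xs. P (a0 xs) (a1 xs) (a2 xs) (a3 xs) (a4 xs) (a5 xs) (a6 xs) (a7 xs) (a8 xs) (a9 xs))"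
  unfolding rp_def by (rule rc_comp10[where h="\<lambda>x0 x1 x2 x3 x4 x5 x6 x7 x8 x9. if P x0 x1 x2 x3 x4 x5 x6 x7 x8 x9 then 1 else 0"])

lemma rp_comp11: "rp 11 (\<lambda>ys. P (ys!0) (ys!1) (ys!2) (ys!3) (ys!4) (ys!5) (ys!6) (ys!7) (ys!8) (ys!9) (ys!10)) \<Longrightarrow> rc k a0 \<Longrightarrow> rc k a1 \<Longrightarrow> rc k a2 \<Longrightarrow> rc k a3 \<Longrightarrow> rc k a4 \<Longrightarrow> rc k a5 \<Longrightarrow> rc k a6 \<Longrightarrow> rc k a7 \<Longrightarrow> rc k a8 \<Longrightarrow> rc k a9 \<Longrightarrow> rc k a10
   \<Longrightarrow> rp k (\<lambda>xs. P (a0 xs) (a1 xs) (a2 xs) (a3 xs) (a4 xs) (a5 xs) (a6 xs) (a7 xs) (a8 xs) (a9 xs) (a10 xs))"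
  unfolding rp_def by (rule rc_comp11[where h="\<lambda>x0 x1 x2 x3 x4 x5 x6 x7 x8 x9 x10. if P x0 x1 x2 x3 x4 x5 x6 x7 x8 x9 x10 then 1 else 0"])

section \<open>Words\<close>

definition cpush :: "nat \<Rightarrow> nat \<Rightarrow> nat \<Rightarrow> nat" where
  "cpush m a c = (if c = 0 then ccons a 0
     else if fst (prod_decode a) = fst (prod_decode (chd c))
       then (if (snd (prod_decode a) + snd (prod_decode (chd c))) mod m = 0 then ctl c
             else ccons (prod_encode (fst (prod_decode a), (snd (prod_decode a) + snd (prod_decode (chd c))) mod m)) (ctl c))
     else ccons a c)"

lemma rc_cpush[rci]: "rc k m \<Longrightarrow> rc k a \<Longrightarrow> rc k c \<Longrightarrow> rc k (\<lambda>xs. cpush (m xs) (a xs) (c xs))"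
  unfolding cpush_def by (rule rci | assumption)+

lemma wc_Nil[simp]: "word_code [] = 0" by (simp add: word_code_def)
lemma wc_Cons: "word_code (x # w) = ccons (prod_encode x) (word_code w)"
  by (simp add: word_code_def ccons_def)

lemma cpush_wc: "cpush m (prod_encode (v, e)) (word_code w) = word_code (fp_push m (v, e) w)"
proof (cases w)
  case Nil then show ?thesis by (simp add: cpush_def wc_Cons ccons_def)
next
  case (Cons x ws)
  obtain w' f where x: "x = (w', f)" by (cases x)
  show ?thesis using Cons x by (simp add: cpush_def wc_Cons ccons_def)
qed

definition crev :: "nat \<Rightarrow> nat" where "crev c = lfold (\<lambda>a r. ccons a r) 0 c"

lemma lfold_ccons: "lfold (\<lambda>a r. ccons a r) (list_encode acc) (list_encode xs) = list_encode (rev xs @ acc)"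
  by (induction xs arbitrary: acc) (simp_all add: ccons_enc del: list_encode.simps)

lemma crev_enc: "crev (list_encode xs) = list_encode (rev xs)"
  using lfold_ccons[of "[]" xs] by (simp add: crev_def)

lemma rc_crev[rci]: "rc k a \<Longrightarrow> rc k (\<lambda>xs. crev (a xs))"
  unfolding crev_def by (rule rci | simp)+

definition cmult :: "nat \<Rightarrow> nat \<Rightarrow> nat \<Rightarrow> nat" where
  "cmult m x y = lfold (\<lambda>a r. cpush m a r) y (crev x)"

lemma rc_cmult3: "rc 3 (\<lambda>ys. cmult (ys!0) (ys!1) (ys!2))"
  unfolding cmult_def by (rule rci | simp)+

lemmas rc_cmult[rci] = rc_comp3[OF rc_cmult3]

lemma word_code_alt: "word_code w = list_encode (map prod_encode w)" by (simp add: word_code_def)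

lemma cmult_wc: "cmult m (word_code x) (word_code y) = word_code (fp_mult m x y)"
proof -
  have "lfold (\<lambda>a r. cpush m a r) (word_code acc) (list_encode (map prod_encode zs))
        = word_code (foldl (\<lambda>r a. fp_push m a r) acc zs)" for acc zs
  proof (induction zs arbitrary: acc)
    case Nil then show ?case by simp
  next
    case (Cons z zs)
    obtain v e where z: "z = (v, e)" by (cases z)
    show ?case using Cons z by (simp add: cpush_wc del: list_encode.simps)
  qed
  then show ?thesis
    by (simp add: cmult_def fp_mult_def word_code_alt crev_enc rev_map foldr_conv_foldl)
qed

definition cinv :: "nat \<Rightarrow> nat \<Rightarrow> nat" where
  "cinv m c = lfold (\<lambda>a r. ccons (prod_encode (fst (prod_decode a), m - snd (prod_decode a))) r) 0 c"

lemma rc_cinv2: "rc 2 (\<lambda>ys. cinv (ys!0) (ys!1))"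
  unfolding cinv_def by (rule rci | simp)+

lemmas rc_cinv[rci] = rc_comp2[OF rc_cinv2]

lemma cinv_wc: "cinv m (word_code x) = word_code (fp_inv m x)"
proof -
  have "lfold (\<lambda>a r. ccons (prod_encode (fst (prod_decode a), m - snd (prod_decode a))) r) (word_code acc) (list_encode (map prod_encode zs))
        = word_code (rev (map (\<lambda>(v, e). (v, m - e)) zs) @ acc)" for acc zs
  proof (induction zs arbitrary: acc)
    case Nil then show ?case by simp
  next
    case (Cons z zs)
    obtain v e where z: "z = (v, e)" by (cases z)
    show ?case using Cons[of "(v, m - e) # acc"] z by (simp add: wc_Cons del: list_encode.simps)
  qed
  from this[of "[]"] show ?thesis by (simp add: cinv_def fp_inv_def word_code_alt)
qed

section \<open>Gaussian rationals as codes\<close>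

definition cq5 :: "nat \<Rightarrow> nat \<Rightarrow> nat \<Rightarrow> nat \<Rightarrow> nat \<Rightarrow> nat" where
  "cq5 a b c d e = prod_encode (a, prod_encode (b, prod_encode (c, prod_encode (d, e))))"
definition q1 :: "nat \<Rightarrow> nat" where "q1 z = fst (prod_decode z)"
definition q2 :: "nat \<Rightarrow> nat" where "q2 z = fst (prod_decode (snd (prod_decode z)))"
definition q3 :: "nat \<Rightarrow> nat" where "q3 z = fst (prod_decode (snd (prod_decode (snd (prod_decode z)))))"
definition q4 :: "nat \<Rightarrow> nat" where "q4 z = fst (prod_decode (snd (prod_decode (snd (prod_decode (snd (prod_decode z)))))))"
definition q5 :: "nat \<Rightarrow> nat" where "q5 z = snd (prod_decode (snd (prod_decode (snd (prod_decode (snd (prod_decode z)))))))"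

lemma q_cq5[simp]: "q1 (cq5 a b c d e) = a" "q2 (cq5 a b c d e) = b" "q3 (cq5 a b c d e) = c"
  "q4 (cq5 a b c d e) = d" "q5 (cq5 a b c d e) = e"
  by (simp_all add: cq5_def q1_def q2_def q3_def q4_def q5_def)

lemma cq5_q: "cq5 (q1 z) (q2 z) (q3 z) (q4 z) (q5 z) = z"
  by (simp add: cq5_def q1_def q2_def q3_def q4_def q5_def)

lemma rc_cq5[rci]: "rc k a \<Longrightarrow> rc k b \<Longrightarrow> rc k c \<Longrightarrow> rc k d \<Longrightarrow> rc k e \<Longrightarrow> rc k (\<lambda>xs. cq5 (a xs) (b xs) (c xs) (d xs) (e xs))"
  unfolding cq5_def by (rule rci | assumption)+
lemma rc_q1[rci]: "rc k a \<Longrightarrow> rc k (\<lambda>xs. q1 (a xs))" unfolding q1_def by (rule rci | assumption)+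
lemma rc_q2[rci]: "rc k a \<Longrightarrow> rc k (\<lambda>xs. q2 (a xs))" unfolding q2_def by (rule rci | assumption)+
lemma rc_q3[rci]: "rc k a \<Longrightarrow> rc k (\<lambda>xs. q3 (a xs))" unfolding q3_def by (rule rci | assumption)+
lemma rc_q4[rci]: "rc k a \<Longrightarrow> rc k (\<lambda>xs. q4 (a xs))" unfolding q4_def by (rule rci | assumption)+
lemma rc_q5[rci]: "rc k a \<Longrightarrow> rc k (\<lambda>xs. q5 (a xs))" unfolding q5_def by (rule rci | assumption)+

definition cval :: "nat \<Rightarrow> complex" where
  "cval z = Complex ((real (q1 z) - real (q2 z)) / (real (q5 z) + 1)) ((real (q3 z) - real (q4 z)) / (real (q5 z) + 1))"

lemma Re_cval: "Re (cval z) = (real (q1 z) - real (q2 z)) / (real (q5 z) + 1)" by (simp add: cval_def)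
lemma Im_cval: "Im (cval z) = (real (q3 z) - real (q4 z)) / (real (q5 z) + 1)" by (simp add: cval_def)

lemma cval_rat: "Re (cval z) \<in> \<rat>" "Im (cval z) \<in> \<rat>"
  unfolding Re_cval Im_cval by (simp_all add: Rats_divide Rats_diff Rats_add)

lemma cval_0[simp]: "cval 0 = 0"
proof -
  have "(0::nat) = cq5 0 0 0 0 0" by (simp add: cq5_def prod_encode_def)
  then show ?thesis by (metis cval_def q_cq5 of_nat_0 diff_self div_0 Complex_eq_0)
qed

lemma real_dm1: "real (e + e' + e * e') + 1 = (real e + 1) * (real e' + 1)"
  by (simp add: algebra_simps)

lemma dpos: "real n + 1 \<noteq> 0" by (simp add: add_nonneg_eq_0_iff)
lemma dpos': "1 + real n \<noteq> 0" by (simp add: add_nonneg_eq_0_iff)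

definition cadd :: "nat \<Rightarrow> nat \<Rightarrow> nat" where
  "cadd z w = cq5 (q1 z * Suc (q5 w) + q1 w * Suc (q5 z)) (q2 z * Suc (q5 w) + q2 w * Suc (q5 z))
                 (q3 z * Suc (q5 w) + q3 w * Suc (q5 z)) (q4 z * Suc (q5 w) + q4 w * Suc (q5 z))
                 (q5 z + q5 w + q5 z * q5 w)"

lemma cval_cadd: "cval (cadd z w) = cval z + cval w"
  unfolding cadd_def
  apply (simp only: complex_eq_iff Re_cval Im_cval q_cq5 real_dm1 plus_complex.sel times_complex.sel)
  apply (simp add: field_simps dpos dpos')
  done

definition cmul :: "nat \<Rightarrow> nat \<Rightarrow> nat" where
  "cmul z w = cq5 (q1 z * q1 w + q2 z * q2 w + q3 z * q4 w + q4 z * q3 w)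
                 (q1 z * q2 w + q2 z * q1 w + q3 z * q3 w + q4 z * q4 w)
                 (q1 z * q3 w + q2 z * q4 w + q3 z * q1 w + q4 z * q2 w)
                 (q1 z * q4 w + q2 z * q3 w + q3 z * q2 w + q4 z * q1 w)
                 (q5 z + q5 w + q5 z * q5 w)"

lemma mul_aux1:
  fixes e e' :: real assumes "e \<ge> 0" "e' \<ge> 0"
  shows "((a1-b1)/(e+1))*((a2-b2)/(e'+1)) - ((c1-d1)/(e+1))*((c2-d2)/(e'+1))
     = ((a1*a2 + b1*b2 + c1*d2 + d1*c2) - (a1*b2 + b1*a2 + c1*c2 + d1*d2)) / ((e + e' + e*e') + 1)"
proof -
  have nz: "e + 1 \<noteq> 0" "e' + 1 \<noteq> 0" using assms by linarith+
  have eq: "(e + e' + e*e') + 1 = (e+1)*(e'+1)" by (simp add: algebra_simps)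
  show ?thesis unfolding eq times_divide_times_eq diff_divide_distrib[symmetric] add_divide_distrib[symmetric]
    by (simp add: algebra_simps)
qed

lemma mul_aux2:
  fixes e e' :: real assumes "e \<ge> 0" "e' \<ge> 0"
  shows "((a1-b1)/(e+1))*((c2-d2)/(e'+1)) + ((c1-d1)/(e+1))*((a2-b2)/(e'+1))
     = ((a1*c2 + b1*d2 + c1*a2 + d1*b2) - (a1*d2 + b1*c2 + c1*b2 + d1*a2)) / ((e + e' + e*e') + 1)"
proof -
  have nz: "e + 1 \<noteq> 0" "e' + 1 \<noteq> 0" using assms by linarith+
  have eq: "(e + e' + e*e') + 1 = (e+1)*(e'+1)" by (simp add: algebra_simps)
  show ?thesis unfolding eq times_divide_times_eq diff_divide_distrib[symmetric] add_divide_distrib[symmetric]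
    by (simp add: algebra_simps)
qed

lemma cval_cmul: "cval (cmul z w) = cval z * cval w"
  unfolding cmul_def
  apply (simp only: complex_eq_iff Re_cval Im_cval q_cq5 times_complex.sel)
  apply (simp only: of_nat_add of_nat_mult mul_aux1[OF of_nat_0_le_iff of_nat_0_le_iff]
                    mul_aux2[OF of_nat_0_le_iff of_nat_0_le_iff])
  done

definition cconj :: "nat \<Rightarrow> nat" where "cconj z = cq5 (q1 z) (q2 z) (q4 z) (q3 z) (q5 z)"
lemma cval_cconj: "cval (cconj z) = cnj (cval z)"
  unfolding cconj_def by (simp add: complex_eq_iff Re_cval Im_cval) (simp add: field_simps)

definition cneg :: "nat \<Rightarrow> nat" where "cneg z = cq5 (q2 z) (q1 z) (q4 z) (q3 z) (q5 z)"
lemma cval_cneg: "cval (cneg z) = - cval z"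
  unfolding cneg_def by (simp add: complex_eq_iff Re_cval Im_cval) (simp add: field_simps)

definition csub :: "nat \<Rightarrow> nat \<Rightarrow> nat" where "csub z w = cadd z (cneg w)"
lemma cval_csub: "cval (csub z w) = cval z - cval w"
  unfolding csub_def by (simp add: cval_cadd cval_cneg)

lemma rc_cadd[rci]: "rc k a \<Longrightarrow> rc k b \<Longrightarrow> rc k (\<lambda>xs. cadd (a xs) (b xs))"
  unfolding cadd_def by (rule rci | assumption)+
lemma rc_cmul[rci]: "rc k a \<Longrightarrow> rc k b \<Longrightarrow> rc k (\<lambda>xs. cmul (a xs) (b xs))"
  unfolding cmul_def by (rule rci | assumption)+
lemma rc_cconj[rci]: "rc k a \<Longrightarrow> rc k (\<lambda>xs. cconj (a xs))"
  unfolding cconj_def by (rule rci | assumption)+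
lemma rc_cneg[rci]: "rc k a \<Longrightarrow> rc k (\<lambda>xs. cneg (a xs))"
  unfolding cneg_def by (rule rci | assumption)+
lemma rc_csub[rci]: "rc k a \<Longrightarrow> rc k b \<Longrightarrow> rc k (\<lambda>xs. csub (a xs) (b xs))"
  unfolding csub_def by (rule rci | assumption)+

section \<open>Norm tests\<close>

definition cnlt :: "nat \<Rightarrow> nat \<Rightarrow> bool" where
  "cnlt z k \<longleftrightarrow> k * k * (q1 z * q1 z + q2 z * q2 z + q3 z * q3 z + q4 z * q4 z)
      < Suc (q5 z) * Suc (q5 z) + k * k * (2 * q1 z * q2 z + 2 * q3 z * q4 z)"

definition cnle1 :: "nat \<Rightarrow> bool" where
  "cnle1 z \<longleftrightarrow> q1 z * q1 z + q2 z * q2 z + q3 z * q3 z + q4 z * q4 z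
      \<le> Suc (q5 z) * Suc (q5 z) + (2 * q1 z * q2 z + 2 * q3 z * q4 z)"

definition cposlt :: "nat \<Rightarrow> nat \<Rightarrow> bool" where
  "cposlt z k \<longleftrightarrow> (if q2 z \<le> q1 z then k * k * (q3 z * q3 z + q4 z * q4 z)
      < Suc (q5 z) * Suc (q5 z) + k * k * (2 * q3 z * q4 z) else cnlt z k)"

lemma rp_cnlt[rci]: "rc j a \<Longrightarrow> rc j b \<Longrightarrow> rp j (\<lambda>xs. cnlt (a xs) (b xs))"
  unfolding cnlt_def by (rule rci | assumption)+
lemma rp_cnle1[rci]: "rc j a \<Longrightarrow> rp j (\<lambda>xs. cnle1 (a xs))"
  unfolding cnle1_def by (rule rci | assumption)+
lemma rp_cposlt[rci]: "rc j a \<Longrightarrow> rc j b \<Longrightarrow> rp j (\<lambda>xs. cposlt (a xs) (b xs))"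
  unfolding cposlt_def by (rule rci | assumption)+

lemma cmod_lt_iff: "r > 0 \<Longrightarrow> cmod w < r \<longleftrightarrow> (Re w)\<^sup>2 + (Im w)\<^sup>2 < r\<^sup>2"
  by (smt (verit) norm_complex_def real_sqrt_less_iff real_sqrt_unique)

lemma cmod_le1_iff: "cmod w \<le> 1 \<longleftrightarrow> (Re w)\<^sup>2 + (Im w)\<^sup>2 \<le> 1"
  unfolding cmod_def by simp

lemma dist_nonneg: "r > 0 \<Longrightarrow> (\<exists>t\<ge>0. cmod (w - of_real t) < r) \<longleftrightarrow> (if Re w \<ge> 0 then \<bar>Im w\<bar> < r else cmod w < r)"
proof -
  assume r: "r > 0"
  show ?thesis
  proof (cases "Re w \<ge> 0")
    case True
    have "(\<exists>t\<ge>0. cmod (w - of_real t) < r) \<longleftrightarrow> \<bar>Im w\<bar> < r"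
    proof
      assume "\<exists>t\<ge>0. cmod (w - of_real t) < r"
      then obtain t where "cmod (w - of_real t) < r" by blast
      moreover have "\<bar>Im (w - of_real t)\<bar> \<le> cmod (w - of_real t)" by (rule abs_Im_le_cmod)
      ultimately show "\<bar>Im w\<bar> < r" by simp
    next
      assume a: "\<bar>Im w\<bar> < r"
      have "w - of_real (Re w) = \<i> * of_real (Im w)" by (simp add: complex_eq_iff)
      then have "cmod (w - of_real (Re w)) = \<bar>Im w\<bar>" by (simp add: norm_mult)
      then show "\<exists>t\<ge>0. cmod (w - of_real t) < r" using True a by (intro exI[of _ "Re w"]) simp
    qed
    then show ?thesis using True by simp
  next
    case False
    have "(\<exists>t\<ge>0. cmod (w - of_real t) < r) \<longleftrightarrow> cmod w < r"
    proof
      assume "\<exists>t\<ge>0. cmod (w - of_real t) < r"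
      then obtain t where t: "t \<ge> 0" "cmod (w - of_real t) < r" by blast
      have "(Re w)\<^sup>2 \<le> (Re w - t)\<^sup>2" using False t(1)
        by (smt (verit, del_insts) real_sqrt_abs real_sqrt_less_iff)
      then have "(Re w)\<^sup>2 + (Im w)\<^sup>2 \<le> (Re (w - of_real t))\<^sup>2 + (Im (w - of_real t))\<^sup>2" by simp
      then show "cmod w < r" using t(2) cmod_lt_iff[OF r] by (meson le_less_trans)
    next
      assume "cmod w < r" then show "\<exists>t\<ge>0. cmod (w - of_real t) < r" by (intro exI[of _ 0]) simp
    qed
    then show ?thesis using False by simp
  qed
qed

lemma nat_sq_diff: "(real a - real b)\<^sup>2 = real (a * a + b * b) - real (2 * a * b)"
  by (simp add: power2_eq_square algebra_simps)

lemma cnlt_iff: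
  assumes k: "1 \<le> k" shows "cnlt z k \<longleftrightarrow> cmod (cval z) < 1 / real k"
proof -
  define D where "D = real (q5 z) + 1"
  define X where "X = real (q1 z) - real (q2 z)"
  define Y where "Y = real (q3 z) - real (q4 z)"
  have D: "D > 0" unfolding D_def by simp
  have kp: "real k > 0" using k by simp
  have "cmod (cval z) < 1 / real k \<longleftrightarrow> (X/D)\<^sup>2 + (Y/D)\<^sup>2 < (1 / real k)\<^sup>2"
    using cmod_lt_iff[of "1 / real k" "cval z"] kp by (simp add: Re_cval Im_cval X_def Y_def D_def)
  also have "\<dots> \<longleftrightarrow> real k * real k * (X\<^sup>2 + Y\<^sup>2) < D * D"
    using D kp by (simp add: power_divide field_simps power2_eq_square)
  also have "\<dots> \<longleftrightarrow> cnlt z k"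
  proof -
    have "real k * real k * (X\<^sup>2 + Y\<^sup>2) = real (k * k * (q1 z * q1 z + q2 z * q2 z + q3 z * q3 z + q4 z * q4 z))
            - real (k * k * (2 * q1 z * q2 z + 2 * q3 z * q4 z))"
      unfolding X_def Y_def by (simp add: power2_eq_square algebra_simps)
    moreover have "D * D = real (Suc (q5 z) * Suc (q5 z))" unfolding D_def by (simp add: algebra_simps)
    ultimately show ?thesis unfolding cnlt_def
      by linarith
  qed
  finally show ?thesis ..
qed

lemma cnle1_iff: "cnle1 z \<longleftrightarrow> cmod (cval z) \<le> 1"
proof -
  define D where "D = real (q5 z) + 1"
  define X where "X = real (q1 z) - real (q2 z)"
  define Y where "Y = real (q3 z) - real (q4 z)"
  have D: "D > 0" unfolding D_def by simp
  have "cmod (cval z) \<le> 1 \<longleftrightarrow> (X/D)\<^sup>2 + (Y/D)\<^sup>2 \<le> 1"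
    using cmod_le1_iff[of "cval z"] by (simp add: Re_cval Im_cval X_def Y_def D_def)
  also have "\<dots> \<longleftrightarrow> X\<^sup>2 + Y\<^sup>2 \<le> D * D"
    using D by (simp add: power_divide field_simps power2_eq_square)
  also have "\<dots> \<longleftrightarrow> cnle1 z"
  proof -
    have "X\<^sup>2 + Y\<^sup>2 = real (q1 z * q1 z + q2 z * q2 z + q3 z * q3 z + q4 z * q4 z)
            - real (2 * q1 z * q2 z + 2 * q3 z * q4 z)"
      unfolding X_def Y_def by (simp add: power2_eq_square algebra_simps)
    moreover have "D * D = real (Suc (q5 z) * Suc (q5 z))" unfolding D_def by (simp add: algebra_simps)
    ultimately show ?thesis unfolding cnle1_def
      by linarith
  qed
  finally show ?thesis ..
qed

lemma cposlt_iff: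
  assumes k: "1 \<le> k" shows "cposlt z k \<longleftrightarrow> (\<exists>t\<ge>0. cmod (cval z - of_real t) < 1 / real k)"
proof -
  have kp: "real k > 0" using k by simp
  have re: "Re (cval z) \<ge> 0 \<longleftrightarrow> q2 z \<le> q1 z"
    by (simp add: Re_cval divide_nonneg_pos add_pos_nonneg) (simp add: zero_le_divide_iff add_pos_nonneg less_le_not_le)
  show ?thesis
  proof (cases "q2 z \<le> q1 z")
    case False
    then show ?thesis using re dist_nonneg[of "1 / real k" "cval z"] kp cnlt_iff[OF k]
      by (simp add: cposlt_def)
  next
    case True
    define D where "D = real (q5 z) + 1"
    define Y where "Y = real (q3 z) - real (q4 z)"
    have D: "D > 0" unfolding D_def by simp
    have "\<bar>Im (cval z)\<bar> < 1 / real k \<longleftrightarrow> (Y/D)\<^sup>2 < (1 / real k)\<^sup>2"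
      unfolding Im_cval Y_def[symmetric] D_def[symmetric]
      using kp by (metis abs_of_pos real_sqrt_abs real_sqrt_less_iff divide_pos_pos zero_less_one)
    also have "\<dots> \<longleftrightarrow> real k * real k * Y\<^sup>2 < D * D"
      using D kp by (simp add: power_divide field_simps power2_eq_square)
    also have "\<dots> \<longleftrightarrow> k * k * (q3 z * q3 z + q4 z * q4 z) < Suc (q5 z) * Suc (q5 z) + k * k * (2 * q3 z * q4 z)"
    proof -
      have "real k * real k * Y\<^sup>2 = real (k * k * (q3 z * q3 z + q4 z * q4 z)) - real (k * k * (2 * q3 z * q4 z))"
        unfolding Y_def by (simp add: power2_eq_square algebra_simps)
      moreover have "D * D = real (Suc (q5 z) * Suc (q5 z))" unfolding D_def by (simp add: algebra_simps)
      ultimately show ?thesis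
        by linarith
    qed
    finally show ?thesis using True re dist_nonneg[of "1 / real k" "cval z"] kp
      by (simp add: cposlt_def)
  qed
qed

definition nP :: "nat \<Rightarrow> nat" where "nP u = (if u mod 2 = 0 then u div 2 else 0)"
definition nN :: "nat \<Rightarrow> nat" where "nN u = (if u mod 2 = 0 then 0 else u div 2 + 1)"

lemma rc_nP[rci]: "rc k a \<Longrightarrow> rc k (\<lambda>xs. nP (a xs))" unfolding nP_def by (rule rci | assumption)+
lemma rc_nN[rci]: "rc k a \<Longrightarrow> rc k (\<lambda>xs. nN (a xs))" unfolding nN_def by (rule rci | assumption)+

lemma int_encode_parts: "real (nP (int_encode a)) - real (nN (int_encode a)) = real_of_int a"
  by (cases "a \<ge> 0") (auto simp: int_encode_def sum_encode_def nP_def nN_def)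

lemma int_encode_pos: "b > 0 \<Longrightarrow> int_encode b div 2 = nat b"
  by (simp add: int_encode_def sum_encode_def)

lemma quot_pos: "snd (quotient_of q) > 0" by (rule quotient_of_denom_pos')

lemma of_rat_quot: "quotient_of q = (a, b) \<Longrightarrow> (of_rat q :: real) = real_of_int a / real_of_int b"
  using quotient_of_div[of q a b] by (simp add: of_rat_divide)

definition rat2cq :: "nat \<Rightarrow> nat" where
  "rat2cq r = cq5 (nP (fst (prod_decode r))) (nN (fst (prod_decode r))) 0 0 (snd (prod_decode r) div 2 - 1)"

lemma rc_rat2cq[rci]: "rc k a \<Longrightarrow> rc k (\<lambda>xs. rat2cq (a xs))" unfolding rat2cq_def by (rule rci | assumption)+

lemma cval_rat2cq: "cval (rat2cq (rat_code q)) = complex_of_real (of_rat q)"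
proof -
  obtain a b where ab: "quotient_of q = (a, b)" by (cases "quotient_of q")
  have b: "b > 0" using quotient_of_denom_pos[OF ab] .
  have "real (nat b - 1) + 1 = real_of_int b" using b by (simp add: of_nat_diff)
  then show ?thesis
    using ab b int_encode_parts[of a]
    by (simp add: rat2cq_def rat_code_def cval_def int_encode_pos of_rat_quot complex_eq_iff)
qed

definition gq2cq :: "nat \<Rightarrow> nat" where
  "gq2cq g = cq5 (nP (fst (prod_decode (fst (prod_decode g)))) * (snd (prod_decode (snd (prod_decode g))) div 2))
                 (nN (fst (prod_decode (fst (prod_decode g)))) * (snd (prod_decode (snd (prod_decode g))) div 2))
                 (nP (fst (prod_decode (snd (prod_decode g)))) * (snd (prod_decode (fst (prod_decode g))) div 2))
                 (nN (fst (prod_decode (snd (prod_decode g)))) * (snd (prod_decode (fst (prod_decode g))) div 2))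
                 ((snd (prod_decode (fst (prod_decode g))) div 2) * (snd (prod_decode (snd (prod_decode g))) div 2) - 1)"

lemma rc_gq2cq[rci]: "rc k a \<Longrightarrow> rc k (\<lambda>xs. gq2cq (a xs))" unfolding gq2cq_def by (rule rci | assumption)+

lemma cval_gq2cq: "cval (gq2cq (gq_code c)) = gq_val c"
proof -
  obtain a1 b1 where ab1: "quotient_of (fst c) = (a1, b1)" by (cases "quotient_of (fst c)")
  obtain a2 b2 where ab2: "quotient_of (snd c) = (a2, b2)" by (cases "quotient_of (snd c)")
  have b1: "b1 > 0" using quotient_of_denom_pos[OF ab1] .
  have b2: "b2 > 0" using quotient_of_denom_pos[OF ab2] .
  have d: "real (nat b1 * nat b2 - 1) + 1 = real_of_int b1 * real_of_int b2"
  proof -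
    have "nat b1 * nat b2 \<ge> 1" using b1 b2 by (simp add: Suc_le_eq)
    then have "real (nat b1 * nat b2 - 1) = real (nat b1 * nat b2) - 1" by (simp add: of_nat_diff)
    then show ?thesis using b1 b2 by simp
  qed
  have e1: "real (nP (int_encode a1)) * real_of_int b2 - real (nN (int_encode a1)) * real_of_int b2 = real_of_int a1 * real_of_int b2"
    using int_encode_parts[of a1] by (simp add: left_diff_distrib[symmetric])
  have e2: "real (nP (int_encode a2)) * real_of_int b1 - real (nN (int_encode a2)) * real_of_int b1 = real_of_int a2 * real_of_int b1"
    using int_encode_parts[of a2] by (simp add: left_diff_distrib[symmetric])
  have d': "real (nat b1 * nat b2 - Suc 0) + 1 = real_of_int b1 * real_of_int b2" using d by simp
  show ?thesis
    unfolding gq2cq_def gq_code_def rat_code_def ab1 ab2 gq_val_def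
    using b1 b2
    by (simp add: cval_def int_encode_pos d' e1 e2 complex_eq_iff of_rat_quot[OF ab1] of_rat_quot[OF ab2])
qed

definition Ew :: "(nat \<Rightarrow> nat) \<Rightarrow> nat \<Rightarrow> nat \<Rightarrow> nat \<Rightarrow> nat" where
  "Ew Ec n m l = Ec (ccons n (ccons m (ccons l 0)))"

definition Sw :: "(nat \<Rightarrow> nat) \<Rightarrow> nat \<Rightarrow> nat \<Rightarrow> nat \<Rightarrow> nat \<Rightarrow> nat \<Rightarrow> nat \<Rightarrow> nat \<Rightarrow> nat" where
  "Sw Sc v w i j k n m = Sc (ccons v (ccons w (ccons i (ccons j (ccons k (ccons n (ccons m 0)))))))"

definition tlook :: "nat \<Rightarrow> nat \<Rightarrow> nat" where
  "tlook T w = lfold (\<lambda>e r. if fst (prod_decode e) = w then snd (prod_decode e) else r) 0 T"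

definition posz :: "(nat \<Rightarrow> nat) \<Rightarrow> nat \<Rightarrow> nat \<Rightarrow> nat \<Rightarrow> nat \<Rightarrow> nat" where
  "posz Ec T n m x = lfold (\<lambda>e1 r1. lfold (\<lambda>e2 r2. cadd r2
      (cmul (cmul (cconj (gq2cq (fst (prod_decode e1)))) (gq2cq (fst (prod_decode e2))))
            (tlook T (cmult m (cinv m (Ew Ec n m (snd (prod_decode e1)))) (Ew Ec n m (snd (prod_decode e2))))))) r1 x) 0 x"

definition conjz :: "(nat \<Rightarrow> nat) \<Rightarrow> nat \<Rightarrow> nat \<Rightarrow> nat \<Rightarrow> nat \<Rightarrow> nat \<Rightarrow> nat" where
  "conjz Ec T n m a b = csub (tlook T (cmult m (cmult m (cinv m (Ew Ec n m b)) (Ew Ec n m a)) (Ew Ec n m b)))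
                              (tlook T (Ew Ec n m a))"

definition reqok :: "(nat \<Rightarrow> nat) \<Rightarrow> (nat \<Rightarrow> nat) \<Rightarrow> nat \<Rightarrow> nat \<Rightarrow> nat \<Rightarrow> nat \<Rightarrow> nat \<Rightarrow> bool" where
  "reqok Ec Rc T k n m l = (if fst (prod_decode (Rc l)) = 0
      then cposlt (posz Ec T n m (snd (prod_decode (Rc l)))) k
      else cnlt (conjz Ec T n m (fst (prod_decode (snd (prod_decode (Rc l))))) (snd (prod_decode (snd (prod_decode (Rc l)))))) k)"

definition sz :: "(nat \<Rightarrow> nat) \<Rightarrow> (nat \<Rightarrow> nat) \<Rightarrow> nat \<Rightarrow> nat \<Rightarrow> nat \<Rightarrow> nat \<Rightarrow> nat \<Rightarrow> nat \<Rightarrow> nat \<Rightarrow> nat \<Rightarrow> nat" where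
  "sz Ec Sc T k n m v w i j = lfold (\<lambda>e r. cadd r (cmul (gq2cq (fst (prod_decode e))) (tlook T (Ew Ec n m (snd (prod_decode e)))))) 0
      (Sw Sc v w i j k n m)"

definition entryok :: "nat \<Rightarrow> bool" where
  "entryok r \<longleftrightarrow> fst (prod_decode r) mod 2 = 0 \<and> snd (prod_decode r) mod 2 = 0 \<and> 2 \<le> snd (prod_decode r)
     \<and> fst (prod_decode r) \<le> snd (prod_decode r)
     \<and> nall (Suc (snd (prod_decode r) div 2)) (\<lambda>q. \<not> (2 \<le> q \<and> (fst (prod_decode r) div 2) mod q = 0 \<and> (snd (prod_decode r) div 2) mod q = 0))"

definition adok :: "(nat \<Rightarrow> nat) \<Rightarrow> (nat \<Rightarrow> nat) \<Rightarrow> nat \<Rightarrow> nat \<Rightarrow> nat \<Rightarrow> nat \<Rightarrow> nat \<Rightarrow> nat \<Rightarrow> nat \<Rightarrow> nat \<Rightarrow> nat \<Rightarrow> bool" where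
  "adok Ec Sc T k n m c v w i j \<longleftrightarrow>
     cnlt (csub (rat2cq (cnth c (((v * n + w) * m + i) * m + j))) (sz Ec Sc T k n m (Suc v) (Suc w) (Suc i) (Suc j))) k"

definition Qx :: "(nat \<Rightarrow> nat) \<Rightarrow> (nat \<Rightarrow> nat) \<Rightarrow> (nat \<Rightarrow> nat) \<Rightarrow> nat \<Rightarrow> nat \<Rightarrow> bool" where
  "Qx Ec Rc Sc x y \<longleftrightarrow> clen x = 4 \<and> 1 \<le> cnth x 0 \<and> 2 \<le> cnth x 1 \<and> 2 \<le> cnth x 2
     \<and> clen (cnth x 3) = cnth x 1 * cnth x 1 * cnth x 2 * cnth x 2
     \<and> lall entryok (cnth x 3)
     \<and> lall (\<lambda>e. cnle1 (snd (prod_decode e))) y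
     \<and> nall (cnth x 0) (\<lambda>l. reqok Ec Rc y (cnth x 0) (cnth x 1) (cnth x 2) (Suc l))
     \<and> nall (cnth x 1) (\<lambda>v. nall (cnth x 1) (\<lambda>w. nall (cnth x 2) (\<lambda>i. nall (cnth x 2) (\<lambda>j.
          adok Ec Sc y (cnth x 0) (cnth x 1) (cnth x 2) (cnth x 3) v w i j))))"

context
  fixes Ec Rc Sc :: "nat \<Rightarrow> nat"
  assumes Ec: "rc 1 (\<lambda>ys. Ec (ys!0))" and Rc: "rc 1 (\<lambda>ys. Rc (ys!0))" and Sc: "rc 1 (\<lambda>ys. Sc (ys!0))"
begin

lemma rc_Ec: "rc k a \<Longrightarrow> rc k (\<lambda>xs. Ec (a xs))" by (rule rc_comp1[OF Ec])
lemma rc_Rc: "rc k a \<Longrightarrow> rc k (\<lambda>xs. Rc (a xs))" by (rule rc_comp1[OF Rc])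
lemma rc_Sc: "rc k a \<Longrightarrow> rc k (\<lambda>xs. Sc (a xs))" by (rule rc_comp1[OF Sc])

lemma rc_Ew: "rc k a \<Longrightarrow> rc k b \<Longrightarrow> rc k c \<Longrightarrow> rc k (\<lambda>xs. Ew Ec (a xs) (b xs) (c xs))"
  unfolding Ew_def by (rule rc_Ec rci | assumption)+

lemma rc_Sw: "rc k a0 \<Longrightarrow> rc k a1 \<Longrightarrow> rc k a2 \<Longrightarrow> rc k a3 \<Longrightarrow> rc k a4 \<Longrightarrow> rc k a5 \<Longrightarrow> rc k a6 \<Longrightarrow>
   rc k (\<lambda>xs. Sw Sc (a0 xs) (a1 xs) (a2 xs) (a3 xs) (a4 xs) (a5 xs) (a6 xs))"
  unfolding Sw_def by (rule rc_Sc rci | assumption)+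

lemma rc_tlook2: "rc 2 (\<lambda>ys. tlook (ys!0) (ys!1))"
  unfolding tlook_def by (rule rci | simp)+
lemmas rc_tlook = rc_comp2[OF rc_tlook2]

lemma rc_posz4: "rc 4 (\<lambda>ys. posz Ec (ys!0) (ys!1) (ys!2) (ys!3))"
  unfolding posz_def by (rule rc_Ew rc_tlook rci | simp)+
lemmas rc_posz = rc_comp4[OF rc_posz4]

lemma rc_conjz5: "rc 5 (\<lambda>ys. conjz Ec (ys!0) (ys!1) (ys!2) (ys!3) (ys!4))"
  unfolding conjz_def by (rule rc_Ew rc_tlook rci | simp)+
lemmas rc_conjz = rc_comp5[OF rc_conjz5]

lemma rp_reqok5: "rp 5 (\<lambda>ys. reqok Ec Rc (ys!0) (ys!1) (ys!2) (ys!3) (ys!4))"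
  unfolding reqok_def by (rule rc_Rc rc_posz rc_conjz rci | simp)+
lemmas rp_reqok = rp_comp5[OF rp_reqok5]

lemma rc_sz8: "rc 8 (\<lambda>ys. sz Ec Sc (ys!0) (ys!1) (ys!2) (ys!3) (ys!4) (ys!5) (ys!6) (ys!7))"
  unfolding sz_def by (rule rc_Ew rc_Sw rc_tlook rci | simp)+
lemmas rc_sz = rc_comp8[OF rc_sz8]

lemma rp_entryok1: "rp 1 (\<lambda>ys. entryok (ys!0))"
  unfolding entryok_def by (rule rci | simp)+
lemmas rp_entryok = rp_comp1[OF rp_entryok1]

lemma rp_adok9: "rp 9 (\<lambda>ys. adok Ec Sc (ys!0) (ys!1) (ys!2) (ys!3) (ys!4) (ys!5) (ys!6) (ys!7) (ys!8))"
  unfolding adok_def by (rule rc_sz rci | simp)+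
lemmas rp_adok = rp_comp9[OF rp_adok9]

lemma rp_Qx: "rp 2 (\<lambda>ys. Qx Ec Rc Sc (ys!0) (ys!1))"
  unfolding Qx_def by (rule rp_reqok rp_adok rp_entryok rci | simp)+

end

section \<open>Carrier closure\<close>

definition valid :: "nat \<Rightarrow> nat \<Rightarrow> nat \<times> nat \<Rightarrow> bool" where
  "valid n m x \<longleftrightarrow> 1 \<le> fst x \<and> fst x \<le> n \<and> 0 < snd x \<and> snd x < m"

lemma carrier_Nil[simp]: "[] \<in> fp_carrier n m" by (simp add: fp_carrier_def)

lemma carrier_Cons: "x # ws \<in> fp_carrier n m \<longleftrightarrow> valid n m x \<and> ws \<in> fp_carrier n m \<and> (ws = [] \<or> fst x \<noteq> fst (hd ws))"
proof -
  have A: "(\<forall>i. Suc i < length (x # ws) \<longrightarrow> fst ((x # ws) ! i) \<noteq> fst ((x # ws) ! Suc i)) \<longleftrightarrow>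
        (ws = [] \<or> fst x \<noteq> fst (hd ws)) \<and> (\<forall>i. Suc i < length ws \<longrightarrow> fst (ws ! i) \<noteq> fst (ws ! Suc i))"
  proof
    assume H: "\<forall>i. Suc i < length (x # ws) \<longrightarrow> fst ((x # ws) ! i) \<noteq> fst ((x # ws) ! Suc i)"
    have "ws = [] \<or> fst x \<noteq> fst (hd ws)"
      using H[rule_format, of 0] by (cases ws) auto
    moreover have "\<forall>i. Suc i < length ws \<longrightarrow> fst (ws ! i) \<noteq> fst (ws ! Suc i)"
      using H by (metis Suc_less_eq length_Cons nth_Cons_Suc)
    ultimately show "(ws = [] \<or> fst x \<noteq> fst (hd ws)) \<and> (\<forall>i. Suc i < length ws \<longrightarrow> fst (ws ! i) \<noteq> fst (ws ! Suc i))" by blast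
  next
    assume H: "(ws = [] \<or> fst x \<noteq> fst (hd ws)) \<and> (\<forall>i. Suc i < length ws \<longrightarrow> fst (ws ! i) \<noteq> fst (ws ! Suc i))"
    show "\<forall>i. Suc i < length (x # ws) \<longrightarrow> fst ((x # ws) ! i) \<noteq> fst ((x # ws) ! Suc i)"
    proof (intro allI impI)
      fix i assume i: "Suc i < length (x # ws)"
      show "fst ((x # ws) ! i) \<noteq> fst ((x # ws) ! Suc i)"
      proof (cases i)
        case 0 then show ?thesis using H i by (cases ws) auto
      next
        case (Suc i') then show ?thesis using H i by auto
      qed
    qed
  qed
  show ?thesis unfolding fp_carrier_def valid_def mem_Collect_eq
    using A by (auto simp: case_prod_beta)
qed

lemma push_carrier:
  assumes "valid n m (v, e)" "w \<in> fp_carrier n m"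
  shows "fp_push m (v, e) w \<in> fp_carrier n m"
proof (cases w)
  case Nil then show ?thesis using assms by (simp add: carrier_Cons)
next
  case (Cons x ws)
  obtain w' f where x: "x = (w', f)" by (cases x)
  have m: "m > 0" using assms(1) by (simp add: valid_def)
  show ?thesis
  proof (cases "v = w'")
    case True
    show ?thesis
    proof (cases "(e + f) mod m = 0")
      case True then show ?thesis using assms Cons x \<open>v = w'\<close> by (simp add: carrier_Cons)
    next
      case False
      then have "valid n m (v, (e + f) mod m)" using assms(1) m by (simp add: valid_def)
      then show ?thesis using assms Cons x \<open>v = w'\<close> False by (auto simp: carrier_Cons)
    qed
  next
    case False then show ?thesis using assms Cons x by (auto simp: carrier_Cons)
  qed
qed

lemma carrier_valid: "w \<in> fp_carrier n m \<Longrightarrow> \<forall>x\<in>set w. valid n m x"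
  by (induction w) (auto simp: carrier_Cons)

lemma mult_carrier:
  assumes "x \<in> fp_carrier n m" "y \<in> fp_carrier n m"
  shows "fp_mult m x y \<in> fp_carrier n m"
proof -
  have "\<forall>a\<in>set xs. valid n m a \<Longrightarrow> foldr (fp_push m) xs y \<in> fp_carrier n m" for xs
  proof (induction xs)
    case Nil then show ?case using assms(2) by simp
  next
    case (Cons a xs)
    obtain v e where a: "a = (v, e)" by (cases a)
    show ?case using Cons a push_carrier by simp
  qed
  then show ?thesis using carrier_valid[OF assms(1)] by (simp add: fp_mult_def)
qed

lemma inv_carrier:
  assumes "x \<in> fp_carrier n m"
  shows "fp_inv m x \<in> fp_carrier n m"
proof -
  let ?y = "map (\<lambda>(v, e). (v, m - e)) x"
  have v: "\<forall>a\<in>set ?y. valid n m a" using carrier_valid[OF assms] by (auto simp: valid_def)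
  have adj: "\<forall>i. Suc i < length x \<longrightarrow> fst (x ! i) \<noteq> fst (x ! Suc i)"
    using assms by (simp add: fp_carrier_def)
  have "fst (rev ?y ! i) \<noteq> fst (rev ?y ! Suc i)" if i: "Suc i < length x" for i
  proof -
    have "rev ?y ! i = ?y ! (length x - Suc i)" "rev ?y ! Suc i = ?y ! (length x - Suc (Suc i))"
      using i by (simp_all add: rev_nth)
    moreover have "length x - Suc i = Suc (length x - Suc (Suc i))" using i by simp
    moreover have "fst (x ! (length x - Suc (Suc i))) \<noteq> fst (x ! Suc (length x - Suc (Suc i)))"
    proof -
      have "Suc (length x - Suc (Suc i)) < length x" using i by linarith
      then show ?thesis using adj by blast
    qed
    ultimately show ?thesis using i by (simp add: case_prod_beta)
  qed
  then show ?thesis using v unfolding fp_inv_def fp_carrier_def valid_def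
    by (auto simp: case_prod_beta)
qed

lemma concat_const_len:
  "\<forall>a\<in>set xs. length (g a) = B \<Longrightarrow> length (concat (map g xs)) = length xs * B"
  by (induction xs) auto

lemma concat_const_nth:
  assumes "\<forall>a\<in>set xs. length (g a) = B" "a < length xs" "r < B"
  shows "concat (map g xs) ! (a * B + r) = g (xs ! a) ! r"
  using assms
proof (induction xs arbitrary: a)
  case Nil then show ?case by simp
next
  case (Cons x xs)
  show ?case
  proof (cases a)
    case 0 then show ?thesis using Cons.prems by (simp add: nth_append)
  next
    case (Suc a')
    have "concat (map g (x # xs)) ! (a * B + r) = concat (map g xs) ! (a' * B + r)"
      using Cons.prems Suc by (simp add: nth_append)
    then show ?thesis using Cons.IH[of a'] Cons.prems Suc by simp
  qed
qed

lemma corr_list_unf: "corr_list n m p = concat (map (\<lambda>v. concat (map (\<lambda>w. concat (map (\<lambda>i. map (\<lambda>j. p i j v w) [1..<m+1]) [1..<m+1])) [1..<n+1])) [1..<n+1])"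
  unfolding corr_list_def by simp

context
  fixes n m :: nat and p :: "nat \<Rightarrow> nat \<Rightarrow> nat \<Rightarrow> nat \<Rightarrow> rat"
begin
definition "g3 v w i = map (\<lambda>j. p i j v w) [1..<m+1]"
definition "g2 v w = concat (map (g3 v w) [1..<m+1])"
definition "g1 v = concat (map (g2 v) [1..<n+1])"

lemma corr_g: "corr_list n m p = concat (map g1 [1..<n+1])"
  unfolding corr_list_unf g1_def g2_def g3_def ..

lemma len_g3: "length (g3 v w i) = m" by (simp add: g3_def)
lemma len_g2: "length (g2 v w) = m * m"
  unfolding g2_def by (subst concat_const_len[where B=m]) (simp_all add: len_g3)
lemma len_g1: "length (g1 v) = n * (m * m)"
  unfolding g1_def by (subst concat_const_len[where B="m*m"]) (simp_all add: len_g2)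
end

lemma corr_list_len: "length (corr_list n m p) = n * n * m * m"
  unfolding corr_g by (subst concat_const_len[where B="n*(m*m)"]) (simp_all add: len_g1)

definition idx :: "nat \<Rightarrow> nat \<Rightarrow> nat \<Rightarrow> nat \<Rightarrow> nat \<Rightarrow> nat \<Rightarrow> nat" where
  "idx n m v w i j = ((v * n + w) * m + i) * m + j"

lemma lt_mult_aux: "a < (A::nat) \<Longrightarrow> r < B \<Longrightarrow> a * B + r < A * B"
proof -
  assume a: "a < A" and r: "r < B"
  have "Suc a * B \<le> A * B" using mult_le_mono1[of "Suc a" A B] a by simp
  then show ?thesis using r by simp
qed

lemma idx_eq: "idx n m v w i j = v * (n * (m * m)) + (w * (m * m) + (i * m + j))"
  unfolding idx_def by (simp add: algebra_simps)

lemma corr_list_nth: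
  assumes "v < n" "w < n" "i < m" "j < m"
  shows "corr_list n m p ! idx n m v w i j = p (Suc i) (Suc j) (Suc v) (Suc w)"
proof -
  have b2: "i * m + j < m * m" using lt_mult_aux[OF assms(3,4)] .
  have b1: "w * (m * m) + (i * m + j) < n * (m * m)" using lt_mult_aux[OF assms(2) b2] .
  have "corr_list n m p ! idx n m v w i j = g1 n m p (Suc v) ! (w * (m * m) + (i * m + j))"
    unfolding corr_g idx_eq using assms(1) b1
    by (subst concat_const_nth[where B="n*(m*m)"]) (simp_all add: len_g1 del: upt_Suc)
  also have "\<dots> = g2 m p (Suc v) (Suc w) ! (i * m + j)"
    unfolding g1_def using assms(2) b2
    by (subst concat_const_nth[where B="m*m"]) (simp_all add: len_g2 del: upt_Suc)
  also have "\<dots> = g3 m p (Suc v) (Suc w) (Suc i) ! j"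
    unfolding g2_def using assms(3,4)
    by (subst concat_const_nth[where B="m"]) (simp_all add: len_g3 del: upt_Suc)
  also have "\<dots> = p (Suc i) (Suc j) (Suc v) (Suc w)"
    unfolding g3_def using assms(4) by (simp del: upt_Suc)
  finally show ?thesis .
qed

lemma idx_decomp:
  assumes "t < n * n * m * m"
  shows "\<exists>v w i j. v < n \<and> w < n \<and> i < m \<and> j < m \<and> t = idx n m v w i j"
proof -
  have m: "m > 0"
  proof (rule ccontr)
    assume "\<not> m > 0" then have "m = 0" by simp
    then show False using assms by simp
  qed
  have n: "n > 0"
  proof (rule ccontr)
    assume "\<not> n > 0" then have "n = 0" by simp
    then show False using assms by simp
  qed
  let ?j = "t mod m" let ?t1 = "t div m"
  let ?i = "?t1 mod m" let ?t2 = "?t1 div m"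
  let ?w = "?t2 mod n" let ?v = "?t2 div n"
  have "t = idx n m ?v ?w ?i ?j" unfolding idx_def by simp
  moreover have "?v < n"
  proof -
    have "t < (n * n) * (m * m)" using assms by (simp add: ac_simps)
    then have "t div (m * m) < n * n" by (simp add: div_less_iff_less_mult m)
    then have "?t2 < n * n" by (simp add: div_mult2_eq)
    then show ?thesis by (simp add: div_less_iff_less_mult n)
  qed
  ultimately show ?thesis using m n by (intro exI[of _ ?v] exI[of _ ?w] exI[of _ ?i] exI[of _ ?j]) simp
qed

lemma idx_bound:
  assumes "v < n" "w < n" "i < m" "j < m"
  shows "idx n m v w i j < n * n * m * m"
proof -
  have b2: "i * m + j < m * m" using lt_mult_aux[OF assms(3,4)] .
  have b1: "w * (m * m) + (i * m + j) < n * (m * m)" using lt_mult_aux[OF assms(2) b2] .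
  have "v * (n * (m * m)) + (w * (m * m) + (i * m + j)) < n * (n * (m * m))" using lt_mult_aux[OF assms(1) b1] .
  then show ?thesis unfolding idx_eq by (simp add: ac_simps)
qed

definition tauT :: "nat \<Rightarrow> fword \<Rightarrow> complex" where "tauT T w = cval (tlook T (word_code w))"

lemma lfold_sum:
  assumes "\<And>e r. cval (F e r) = cval r + g e"
  shows "cval (lfold F r0 (list_encode es)) = cval r0 + sum_list (map g es)"
proof (induction es arbitrary: r0)
  case Nil then show ?case by simp
next
  case (Cons e es)
  have "lfold F r0 (list_encode (e # es)) = lfold F (F e r0) (list_encode es)"
    by (simp only: lfold_Cons)
  then show ?case using Cons[of "F e r0"] assms by (simp add: algebra_simps)
qed

lemma tlook_gen:
  assumes "\<forall>x\<in>set W. key x = k0 \<longrightarrow> val x = V"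
  shows "lfold (\<lambda>e r. if fst (prod_decode e) = k0 then snd (prod_decode e) else r) r0
           (list_encode (map (\<lambda>x. prod_encode (key x, val x)) W)) = (if \<exists>x\<in>set W. key x = k0 then V else r0)"
  using assms
proof (induction W arbitrary: r0)
  case Nil then show ?case by simp
next
  case (Cons x W)
  have "lfold (\<lambda>e r. if fst (prod_decode e) = k0 then snd (prod_decode e) else r) r0
           (list_encode (map (\<lambda>x. prod_encode (key x, val x)) (x # W)))
        = lfold (\<lambda>e r. if fst (prod_decode e) = k0 then snd (prod_decode e) else r)
           (if key x = k0 then val x else r0) (list_encode (map (\<lambda>x. prod_encode (key x, val x)) W))"
    by (simp only: list.map lfold_Cons prod_encode_inverse fst_conv snd_conv)
  then show ?case using Cons by auto
qed

lemma tlook_table: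
  assumes "\<forall>x\<in>set W. key x = k0 \<longrightarrow> val x = V" "\<exists>x\<in>set W. key x = k0"
  shows "tlook (list_encode (map (\<lambda>x. prod_encode (key x, val x)) W)) k0 = V"
  unfolding tlook_def using tlook_gen[OF assms(1), of 0] assms(2) by simp

lemma tlook_range_gen:
  "lfold (\<lambda>e r. if fst (prod_decode e) = k0 then snd (prod_decode e) else r) r0 (list_encode es)
     \<in> insert r0 ((\<lambda>e. snd (prod_decode e)) ` set es)"
proof (induction es arbitrary: r0)
  case Nil then show ?case by simp
next
  case (Cons e es)
  have "lfold (\<lambda>e r. if fst (prod_decode e) = k0 then snd (prod_decode e) else r) r0 (list_encode (e # es))
     = lfold (\<lambda>e r. if fst (prod_decode e) = k0 then snd (prod_decode e) else r)
         (if fst (prod_decode e) = k0 then snd (prod_decode e) else r0) (list_encode es)"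
    by (simp only: lfold_Cons)
  then show ?case using Cons[of "if fst (prod_decode e) = k0 then snd (prod_decode e) else r0"] by auto
qed

lemma tauT_bound:
  assumes "lall (\<lambda>e. cnle1 (snd (prod_decode e))) T"
  shows "cmod (tauT T w) \<le> 1"
proof -
  have "tlook T (word_code w) \<in> insert 0 ((\<lambda>e. snd (prod_decode e)) ` set (list_decode T))"
    unfolding tlook_def using tlook_range_gen[of "word_code w" 0 "list_decode T"] by simp
  moreover have "cnle1 0" by (simp add: cnle1_iff)
  ultimately show ?thesis using assms unfolding tauT_def lall_def by (auto simp: cnle1_iff[symmetric])
qed

lemma tauT_rat: "Re (tauT T w) \<in> \<rat>" "Im (tauT T w) \<in> \<rat>"
  unfolding tauT_def by (rule cval_rat)+

lemma fgr_eval_Nil[simp]: "fgr_eval \<tau> [] = 0" by (simp add: fgr_eval_def)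
lemma fgr_eval_Cons[simp]: "fgr_eval \<tau> ((a, g) # x) = a * \<tau> g + fgr_eval \<tau> x" by (simp add: fgr_eval_def)
lemma fgr_eval_append[simp]: "fgr_eval \<tau> (x @ y) = fgr_eval \<tau> x + fgr_eval \<tau> y" by (simp add: fgr_eval_def)
lemma fgr_eval_concat: "fgr_eval \<tau> (concat xs) = (\<Sum>x\<leftarrow>xs. fgr_eval \<tau> x)"
  by (induction xs) auto

lemma fgr_eval_cong: "(\<forall>g\<in>snd ` set x. \<tau>1 g = \<tau>2 g) \<Longrightarrow> fgr_eval \<tau>1 x = fgr_eval \<tau>2 x"
proof (induction x)
  case Nil then show ?case by simp
next
  case (Cons y x)
  obtain a g where "y = (a, g)" by (cases y)
  then show ?case using Cons by simp
qed

definition Ecf :: "(nat \<Rightarrow> nat \<Rightarrow> nat \<Rightarrow> fword) \<Rightarrow> nat \<Rightarrow> nat" where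
  "Ecf E = (\<lambda>c. case list_decode c of [n, m, l] \<Rightarrow> word_code (E n m l) | _ \<Rightarrow> 0)"
definition Scf :: "(nat \<Rightarrow> nat \<Rightarrow> nat \<Rightarrow> nat \<Rightarrow> nat \<Rightarrow> nat \<Rightarrow> nat \<Rightarrow> qelt) \<Rightarrow> nat \<Rightarrow> nat" where
  "Scf S = (\<lambda>c. case list_decode c of [v, w, i, j, k, n, m] \<Rightarrow> qelt_code (S v w i j k n m) | _ \<Rightarrow> 0)"

lemma ccons3: "ccons a (ccons b (ccons c 0)) = list_encode [a, b, c]" by (simp add: ccons_def)
lemma ccons7: "ccons a (ccons b (ccons c (ccons d (ccons e (ccons f (ccons g 0)))))) = list_encode [a, b, c, d, e, f, g]"
  by (simp add: ccons_def)

lemma Ew_E: "Ew (Ecf E) n m l = word_code (E n m l)"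
  unfolding Ew_def ccons3 Ecf_def by simp

lemma Sw_S: "Sw (Scf S) v w i j k n m = qelt_code (S v w i j k n m)"
  unfolding Sw_def ccons7 Scf_def by simp

definition enc :: "gq \<times> nat \<Rightarrow> nat" where "enc y = prod_encode (gq_code (fst y), snd y)"

lemma qelt_code_enc: "qelt_code x = list_encode (map enc x)"
  unfolding qelt_code_def enc_def by (rule arg_cong[where f=list_encode], rule map_cong) auto

lemma posz_sem:
  "cval (posz (Ecf E) T n m (qelt_code x))
   = fgr_eval (tauT T) (fgr_mult m (fgr_star m (qelt_val (E n m) x)) (qelt_val (E n m) x))"
proof -
  define G where "G e1 e2 = cmul (cmul (cconj (gq2cq (fst (prod_decode e1)))) (gq2cq (fst (prod_decode e2))))
            (tlook T (cmult m (cinv m (Ew (Ecf E) n m (snd (prod_decode e1)))) (Ew (Ecf E) n m (snd (prod_decode e2)))))" for e1 e2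
  define t where "t y1 y2 = cnj (gq_val (fst y1)) * gq_val (fst y2) * tauT T (fp_mult m (fp_inv m (E n m (snd y1))) (E n m (snd y2)))" for y1 y2
  have Gt: "cval (G (enc y1) (enc y2)) = t y1 y2" for y1 y2
    unfolding G_def t_def enc_def tauT_def
    by (simp add: cval_cmul cval_cconj cval_gq2cq Ew_E cinv_wc cmult_wc)
  have inner: "cval (lfold (\<lambda>e2 r2. cadd r2 (G e1 e2)) r1 (list_encode (map enc x)))
       = cval r1 + (\<Sum>y2\<leftarrow>x. cval (G e1 (enc y2)))" for e1 r1
    using lfold_sum[of "\<lambda>e2 r2. cadd r2 (G e1 e2)" "\<lambda>e2. cval (G e1 e2)" r1 "map enc x"]
    by (simp add: cval_cadd comp_def)
  have outer: "cval (lfold (\<lambda>e1 r1. lfold (\<lambda>e2 r2. cadd r2 (G e1 e2)) r1 (list_encode (map enc x))) 0 (list_encode (map enc x)))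
      = (\<Sum>y1\<leftarrow>x. \<Sum>y2\<leftarrow>x. t y1 y2)"
    using lfold_sum[of "\<lambda>e1 r1. lfold (\<lambda>e2 r2. cadd r2 (G e1 e2)) r1 (list_encode (map enc x))"
        "\<lambda>e1. \<Sum>y2\<leftarrow>x. cval (G e1 (enc y2))" 0 "map enc x"] inner
    by (simp add: comp_def Gt)
  have lhs: "cval (posz (Ecf E) T n m (qelt_code x)) = (\<Sum>y1\<leftarrow>x. \<Sum>y2\<leftarrow>x. t y1 y2)"
    unfolding posz_def qelt_code_enc G_def[symmetric] using outer by simp
  have rhs: "fgr_eval (tauT T) (fgr_mult m (fgr_star m (qelt_val (E n m) x)) (qelt_val (E n m) x))
      = (\<Sum>y1\<leftarrow>x. \<Sum>y2\<leftarrow>x. t y1 y2)"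
  proof -
    have "fgr_eval \<tau> (map (\<lambda>(b, h). (a * b, fp_mult m g h)) (qelt_val (E n m) x))
         = (\<Sum>y2\<leftarrow>x. a * gq_val (fst y2) * \<tau> (fp_mult m g (E n m (snd y2))))" for \<tau> a g
      unfolding qelt_val_def by (induction x) (auto simp: case_prod_beta)
    then show ?thesis
      unfolding fgr_mult_def fgr_star_def fgr_eval_concat t_def
      by (simp add: qelt_val_def comp_def case_prod_beta)
  qed
  show ?thesis using lhs rhs by simp
qed

lemma conjz_sem:
  "cval (conjz (Ecf E) T n m a b)
   = tauT T (fp_mult m (fp_mult m (fp_inv m (E n m b)) (E n m a)) (E n m b)) - tauT T (E n m a)"
  unfolding conjz_def tauT_def by (simp add: cval_csub Ew_E cinv_wc cmult_wc)

lemma reqok_sem: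
  assumes k: "1 \<le> k"
  shows "reqok (Ecf E) (\<lambda>l. req_code (R l)) T k n m l \<longleftrightarrow> req_relax k m (E n m) (tauT T) (R l)"
proof (cases "R l")
  case (PosReq x)
  then show ?thesis
    by (simp add: reqok_def req_code_def req_relax_def cposlt_iff[OF k] posz_sem)
next
  case (ConjReq a b)
  then show ?thesis
    by (simp add: reqok_def req_code_def req_relax_def cnlt_iff[OF k] conjz_sem)
qed

lemma qv_sum: "(\<Sum>y\<leftarrow>xs. gq_val (fst y) * \<tau> (E n m (snd y))) = fgr_eval \<tau> (qelt_val (E n m) xs)"
  unfolding qelt_val_def by (induction xs) (auto simp: case_prod_beta)

lemma sz_sem:
  "cval (sz (Ecf E) (Scf S) T k n m v w i j) = fgr_eval (tauT T) (qelt_val (E n m) (S v w i j k n m))"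
proof -
  define G where "G e = cmul (gq2cq (fst (prod_decode e))) (tlook T (Ew (Ecf E) n m (snd (prod_decode e))))" for e
  have Gt: "cval (G (enc y)) = gq_val (fst y) * tauT T (E n m (snd y))" for y
    unfolding G_def enc_def tauT_def by (simp add: cval_cmul cval_gq2cq Ew_E)
  have "cval (sz (Ecf E) (Scf S) T k n m v w i j) = (\<Sum>y\<leftarrow>S v w i j k n m. gq_val (fst y) * tauT T (E n m (snd y)))"
    unfolding sz_def Sw_S qelt_code_enc G_def[symmetric]
    using lfold_sum[of "\<lambda>e r. cadd r (G e)" "\<lambda>e. cval (G e)" 0 "map enc (S v w i j k n m)"]
    by (simp add: cval_cadd comp_def Gt)
  also have "\<dots> = fgr_eval (tauT T) (qelt_val (E n m) (S v w i j k n m))"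
    using qv_sum[of "tauT T" E n m "S v w i j k n m"] .
  finally show ?thesis .
qed

lemma adok_sem:
  assumes k: "1 \<le> k" and c: "cnth c (idx n m v w i j) = rat_code q"
  shows "adok (Ecf E) (Scf S) T k n m c v w i j \<longleftrightarrow>
     cmod (complex_of_real (of_rat q) - fgr_eval (tauT T) (qelt_val (E n m) (S (Suc v) (Suc w) (Suc i) (Suc j) k n m))) < 1 / real k"
  using c unfolding adok_def idx_def[symmetric]
  by (simp add: cnlt_iff[OF k] cval_csub cval_rat2cq sz_sem)

lemma int_encode_nonneg: "a \<ge> 0 \<Longrightarrow> int_encode a = 2 * nat a"
  by (simp add: int_encode_def sum_encode_def)

lemma entryok_rat:
  assumes q0: "0 \<le> q" and q1: "q \<le> 1"
  shows "entryok (rat_code q)"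
proof -
  obtain a b where ab: "quotient_of q = (a, b)" by (cases "quotient_of q")
  have b: "b > 0" using quotient_of_denom_pos[OF ab] .
  have cop: "coprime a b" using quotient_of_coprime[OF ab] .
  have qab: "q = of_int a / of_int b" using quotient_of_div[OF ab] .
  have a0: "a \<ge> 0"
  proof (rule ccontr)
    assume "\<not> a \<ge> 0"
    then have "(of_int a :: rat) / of_int b < 0" using b by (simp add: divide_neg_pos)
    then show False using q0 qab by simp
  qed
  have ab': "a \<le> b"
  proof (rule ccontr)
    assume "\<not> a \<le> b"
    then have "(of_int a :: rat) / of_int b > 1" using b by simp
    then show False using q1 qab by simp
  qed
  have rc: "rat_code q = prod_encode (2 * nat a, 2 * nat b)"
    unfolding rat_code_def ab using a0 b by (simp add: int_encode_nonneg)
  have copn: "coprime (nat a) (nat b)" using cop a0 b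
    by (metis coprime_int_iff int_nat_eq less_le)
  have nd: "\<not> (2 \<le> d \<and> nat a mod d = 0 \<and> nat b mod d = 0)" for d
  proof
    assume "2 \<le> d \<and> nat a mod d = 0 \<and> nat b mod d = 0"
    then have "d dvd nat a" "d dvd nat b" "2 \<le> d" by auto
    then show False using coprime_common_divisor_nat[OF copn] by fastforce
  qed
  have "Suc 0 \<le> nat b" using b by simp
  moreover have "nat a \<le> nat b" using ab' by (rule nat_mono)
  ultimately show ?thesis unfolding entryok_def rc nall_def using a0 b ab' nd by simp
qed

definition qdec :: "nat \<Rightarrow> rat" where
  "qdec r = Fract (int (fst (prod_decode r) div 2)) (int (snd (prod_decode r) div 2))"

lemma entryok_dec:
  assumes "entryok r"
  shows "rat_code (qdec r) = r" "0 \<le> qdec r" "qdec r \<le> 1"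
proof -
  define u where "u = fst (prod_decode r)"
  define d where "d = snd (prod_decode r)"
  define a where "a = u div 2"
  define b where "b = d div 2"
  have eo: "u mod 2 = 0" "d mod 2 = 0" "2 \<le> d" "u \<le> d"
    and nd: "\<forall>q<Suc b. \<not> (2 \<le> q \<and> a mod q = 0 \<and> b mod q = 0)"
    using assms unfolding entryok_def u_def[symmetric] d_def[symmetric] a_def[symmetric] b_def[symmetric] nall_def
    by auto
  have u: "u = 2 * a" and d: "d = 2 * b" using eo unfolding a_def b_def by auto
  have b: "b \<ge> 1" using eo(3) d by simp
  have ab: "a \<le> b" using eo(4) u d by simp
  have copn: "coprime a b"
  proof -
    let ?g = "gcd a b"
    have g0: "?g > 0" using b by simp
    have gb: "?g \<le> b" using b by (simp add: gcd_le2_nat)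
    have "\<not> (2 \<le> ?g)" using nd gb by (metis gcd_dvd1 gcd_dvd2 dvd_imp_mod_0 less_Suc_eq_le)
    then have "?g = 1" using g0 by linarith
    then show ?thesis by (simp add: coprime_iff_gcd_eq_1)
  qed
  have copi: "coprime (int a) (int b)" using copn by simp
  have q: "quotient_of (qdec r) = (int a, int b)"
    unfolding qdec_def u_def[symmetric] d_def[symmetric] a_def[symmetric] b_def[symmetric]
    using b copi by (simp add: quotient_of_Fract normalize_def coprime_iff_gcd_eq_1[symmetric])
  show "rat_code (qdec r) = r"
    unfolding rat_code_def q using b
    by (simp add: int_encode_nonneg u[symmetric] d[symmetric] u_def d_def)
  have qv: "qdec r = of_int (int a) / of_int (int b)"
    unfolding qdec_def u_def[symmetric] d_def[symmetric] a_def[symmetric] b_def[symmetric]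
    by (simp add: Fract_of_int_quotient)
  show "0 \<le> qdec r" unfolding qv by simp
  show "qdec r \<le> 1" unfolding qv using ab b by simp
qed

lemma word_code_inj: "word_code a = word_code b \<Longrightarrow> a = b"
  unfolding word_code_def by (simp add: list_encode_eq inj_map_eq_map[OF inj_prod_encode])

lemma cval_surj: "Re z \<in> \<rat> \<Longrightarrow> Im z \<in> \<rat> \<Longrightarrow> \<exists>c. cval c = z"
proof -
  assume "Re z \<in> \<rat>" "Im z \<in> \<rat>"
  then obtain r1 r2 where "Re z = of_rat r1" "Im z = of_rat r2" by (auto elim!: Rats_cases)
  then have "cval (gq2cq (gq_code (r1, r2))) = z" by (simp add: cval_gq2cq gq_val_def complex_eq_iff)
  then show ?thesis ..
qed

lemma len4: "length L = 4 \<Longrightarrow> L = [L!0, L!1, L!2, L!3]"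
  by (simp add: length_Suc_conv eval_nat_numeral) (auto)

lemma sound:
  assumes Q: "Qx (Ecf E) (\<lambda>l. req_code (R l)) (Scf S) x y"
  shows "x \<in> Xcodes E R S"
proof -
  define K where "K = cnth x 0"
  define N where "N = cnth x 1"
  define M where "M = cnth x 2"
  define C where "C = cnth x 3"
  have q: "clen x = 4" "1 \<le> K" "2 \<le> N" "2 \<le> M" "clen C = N * N * M * M" "lall entryok C"
     "lall (\<lambda>e. cnle1 (snd (prod_decode e))) y"
     "nall K (\<lambda>l. reqok (Ecf E) (\<lambda>l. req_code (R l)) y K N M (Suc l))"
     "nall N (\<lambda>v. nall N (\<lambda>w. nall M (\<lambda>i. nall M (\<lambda>j. adok (Ecf E) (Scf S) y K N M C v w i j))))"
    using Q unfolding Qx_def K_def[symmetric] N_def[symmetric] M_def[symmetric] C_def[symmetric] by auto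
  define L where "L = list_decode x"
  have xL: "x = list_encode L" unfolding L_def by simp
  have lL: "length L = 4" using q(1) unfolding xL by simp
  have "L = [L!0, L!1, L!2, L!3]" using len4[OF lL] .
  moreover have "L!0 = K" "L!1 = N" "L!2 = M" "L!3 = C"
    unfolding K_def N_def M_def C_def xL using lL by simp_all
  ultimately have lx: "x = list_encode [K, N, M, C]" using xL by simp
  define cs where "cs = list_decode C"
  have Ccs: "C = list_encode cs" unfolding cs_def by simp
  have lcs: "length cs = N * N * M * M" using q(5) unfolding Ccs by simp
  have eok: "entryok r" if "r \<in> set cs" for r using q(6) that unfolding lall_def cs_def by simp
  define p where "p = (\<lambda>i j v w. qdec (cs ! idx N M (v - 1) (w - 1) (i - 1) (j - 1)))"
  have pc: "map rat_code (corr_list N M p) = cs"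
  proof (rule nth_equalityI)
    show "length (map rat_code (corr_list N M p)) = length cs" by (simp add: corr_list_len lcs)
  next
    fix t assume "t < length (map rat_code (corr_list N M p))"
    then have t: "t < N * N * M * M" by (simp add: corr_list_len)
    obtain v w i j where r: "v < N" "w < N" "i < M" "j < M" and te: "t = idx N M v w i j"
      using idx_decomp[OF t] by blast
    have "map rat_code (corr_list N M p) ! t = rat_code (p (Suc i) (Suc j) (Suc v) (Suc w))"
      using t te corr_list_nth[OF r, of p] by (simp add: corr_list_len)
    also have "\<dots> = rat_code (qdec (cs ! t))" unfolding p_def te by simp
    also have "\<dots> = cs ! t" using entryok_dec(1)[OF eok] t lcs by simp
    finally show "map rat_code (corr_list N M p) ! t = cs ! t" .
  qed
  have xk: "x = kmnp_code K N M p" unfolding kmnp_code_def pc lx Ccs ..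
  have pval: "cnth C (idx N M (v - 1) (w - 1) (i - 1) (j - 1)) = rat_code (p i j v w)
        \<and> 0 \<le> p i j v w \<and> p i j v w \<le> 1"
    if "v \<in> {1..N}" "w \<in> {1..N}" "i \<in> {1..M}" "j \<in> {1..M}" for v w i j
  proof -
    have b: "idx N M (v - 1) (w - 1) (i - 1) (j - 1) < N * N * M * M"
      using that by (intro idx_bound) auto
    then have inset: "cs ! idx N M (v - 1) (w - 1) (i - 1) (j - 1) \<in> set cs" using lcs by simp
    have "cnth C (idx N M (v - 1) (w - 1) (i - 1) (j - 1)) = cs ! idx N M (v - 1) (w - 1) (i - 1) (j - 1)"
      unfolding Ccs using b lcs by simp
    then show ?thesis unfolding p_def using entryok_dec[OF eok[OF inset]] by simp
  qed
  have k1: "1 \<le> K" by (rule q(2))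
  have at: "approx_trace K N M E R (tauT y)"
    unfolding approx_trace_def
  proof (intro conjI ballI)
    fix g show "cmod (tauT y g) \<le> 1" using tauT_bound[OF q(7)] .
  next
    fix l assume l: "l \<in> {1..K}"
    then have "l - 1 < K" "Suc (l - 1) = l" by auto
    then have "reqok (Ecf E) (\<lambda>l. req_code (R l)) y K N M l" using q(8) unfolding nall_def by metis
    then show "req_relax K M (E N M) (tauT y) (R l)" using l reqok_sem[OF k1] by simp
  qed
  have ad: "adapted K N M E S p (tauT y)"
    unfolding adapted_def
  proof (intro ballI)
    fix v w i j assume r: "v \<in> {1..N}" "w \<in> {1..N}" "i \<in> {1..M}" "j \<in> {1..M}"
    have "v - 1 < N" "w - 1 < N" "i - 1 < M" "j - 1 < M" using r by auto
    then have "adok (Ecf E) (Scf S) y K N M C (v - 1) (w - 1) (i - 1) (j - 1)"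
      using q(9) unfolding nall_def by blast
    then show "cmod (complex_of_real (of_rat (p i j v w)) - fgr_eval (tauT y) (qelt_val (E N M) (S v w i j K N M))) < 1 / real K"
      using adok_sem[OF k1 conjunct1[OF pval[OF r]]] r by simp
  qed
  have "p \<in> Xset K N M E R S"
    unfolding Xset_def using pval at ad tauT_rat by blast
  then show ?thesis unfolding Xcodes_def using xk q(2,3,4) by blast
qed

lemma in_concat_map: "a \<in> set xs \<Longrightarrow> g \<in> set (f a) \<Longrightarrow> g \<in> set (concat (map f xs))"
  by auto

lemma words_pos:
  "g \<in> set (map snd (fgr_mult m (fgr_star m (qelt_val F x)) (qelt_val F x)))
   \<Longrightarrow> \<exists>l1 l2. g = fp_mult m (fp_inv m (F l1)) (F l2)"
  by (auto simp: fgr_mult_def fgr_star_def qelt_val_def) blast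

lemma req_relax_cong:
  assumes "\<forall>g\<in>set (case r of PosReq x \<Rightarrow> map snd (fgr_mult m (fgr_star m (qelt_val F x)) (qelt_val F x))
            | ConjReq a b \<Rightarrow> [fp_mult m (fp_mult m (fp_inv m (F b)) (F a)) (F b), F a]). \<tau>1 g = \<tau>2 g"
  shows "req_relax k m F \<tau>1 r = req_relax k m F \<tau>2 r"
proof (cases r)
  case (PosReq x)
  then have "fgr_eval \<tau>1 (fgr_mult m (fgr_star m (qelt_val F x)) (qelt_val F x))
      = fgr_eval \<tau>2 (fgr_mult m (fgr_star m (qelt_val F x)) (qelt_val F x))"
    using assms by (intro fgr_eval_cong) simp
  then show ?thesis using PosReq by (simp add: req_relax_def)
next
  case (ConjReq a b)
  then show ?thesis using assms by (simp add: req_relax_def)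
qed

lemma complete:
  assumes E_enum: "\<And>n m. 2 \<le> n \<Longrightarrow> 2 \<le> m \<Longrightarrow> range (E n m) = fp_carrier n m"
    and xX: "x \<in> Xcodes E R S"
  shows "\<exists>y. Qx (Ecf E) (\<lambda>l. req_code (R l)) (Scf S) x y"
proof -
  obtain k n m p where xk: "x = kmnp_code k n m p" and n2: "2 \<le> n" and m2: "2 \<le> m" and k1: "1 \<le> k"
    and pX: "p \<in> Xset k n m E R S"
    using xX unfolding Xcodes_def by blast
  obtain \<tau> where prange: "\<forall>v\<in>{1..n}. \<forall>w\<in>{1..n}. \<forall>i\<in>{1..m}. \<forall>j\<in>{1..m}. 0 \<le> p i j v w \<and> p i j v w \<le> 1"
    and at: "approx_trace k n m E R \<tau>"
    and rat: "\<forall>g\<in>fp_carrier n m. Re (\<tau> g) \<in> \<rat> \<and> Im (\<tau> g) \<in> \<rat>"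
    and ad: "adapted k n m E S p \<tau>"
    using pX unfolding Xset_def by blast
  have Ecar: "E n m l \<in> fp_carrier n m" for l using E_enum[OF n2 m2] by blast
  define rw where "rw l = (case R l of PosReq x \<Rightarrow> map snd (fgr_mult m (fgr_star m (qelt_val (E n m) x)) (qelt_val (E n m) x))
            | ConjReq a b \<Rightarrow> [fp_mult m (fp_mult m (fp_inv m (E n m b)) (E n m a)) (E n m b), E n m a])" for l
  define sw where "sw v w i j = map snd (qelt_val (E n m) (S v w i j k n m))" for v w i j
  define W where "W = concat (map rw [1..<Suc k]) @ concat (map (\<lambda>v. concat (map (\<lambda>w. concat (map (\<lambda>i.
        concat (map (\<lambda>j. sw v w i j) [1..<Suc m])) [1..<Suc m])) [1..<Suc n])) [1..<Suc n])"
  have rwc: "g \<in> fp_carrier n m" if "g \<in> set (rw l)" for g l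
  proof (cases "R l")
    case (PosReq x)
    have "g \<in> set (map snd (fgr_mult m (fgr_star m (qelt_val (E n m) x)) (qelt_val (E n m) x)))"
      using that PosReq unfolding rw_def by simp
    then obtain l1 l2 where "g = fp_mult m (fp_inv m (E n m l1)) (E n m l2)"
      using words_pos by blast
    then show ?thesis using Ecar by (simp add: mult_carrier inv_carrier)
  next
    case (ConjReq a b)
    then show ?thesis using that Ecar unfolding rw_def by (auto simp: mult_carrier inv_carrier)
  qed
  have swc: "g \<in> fp_carrier n m" if "g \<in> set (sw v w i j)" for g v w i j
    using that Ecar unfolding sw_def qelt_val_def by auto
  have Wc: "g \<in> fp_carrier n m" if "g \<in> set W" for g
    using that rwc swc unfolding W_def by (auto simp del: upt_Suc)
  define val where "val g = (SOME c. cval c = \<tau> g)" for g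
  have val: "cval (val g) = \<tau> g" if "g \<in> fp_carrier n m" for g
  proof -
    have "\<exists>c. cval c = \<tau> g" using cval_surj rat that by blast
    then show ?thesis unfolding val_def by (rule someI_ex)
  qed
  define T where "T = list_encode (map (\<lambda>g. prod_encode (word_code g, val g)) W)"
  have tT: "tauT T g = \<tau> g" if "g \<in> set W" for g
  proof -
    have "tlook T (word_code g) = val g"
      unfolding T_def
      by (rule tlook_table) (use that word_code_inj in auto)
    then show ?thesis unfolding tauT_def using val Wc that by simp
  qed
  define C where "C = list_encode (map rat_code (corr_list n m p))"
  have lx: "x = list_encode [k, n, m, C]" unfolding xk kmnp_code_def C_def ..
  have cx: "cnth x 0 = k" "cnth x 1 = n" "cnth x 2 = m" "cnth x 3 = C" unfolding lx by (simp_all add: cnth_enc del: list_encode.simps)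
  have pv: "cnth C (idx n m v w i j) = rat_code (p (Suc i) (Suc j) (Suc v) (Suc w))"
      "0 \<le> p (Suc i) (Suc j) (Suc v) (Suc w) \<and> p (Suc i) (Suc j) (Suc v) (Suc w) \<le> 1"
    if r: "v < n" "w < n" "i < m" "j < m" for v w i j
  proof -
    have b: "idx n m v w i j < length (corr_list n m p)" using idx_bound[OF r] by (simp add: corr_list_len)
    show "cnth C (idx n m v w i j) = rat_code (p (Suc i) (Suc j) (Suc v) (Suc w))"
      unfolding C_def using b corr_list_nth[OF r, of p] by simp
    show "0 \<le> p (Suc i) (Suc j) (Suc v) (Suc w) \<and> p (Suc i) (Suc j) (Suc v) (Suc w) \<le> 1"
      using prange r by simp
  qed
  have c1: "lall entryok C"
    unfolding lall_def C_def
  proof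
    fix r assume "r \<in> set (list_decode (list_encode (map rat_code (corr_list n m p))))"
    then obtain t where t: "t < length (corr_list n m p)" and rt: "r = rat_code (corr_list n m p ! t)"
      by (auto simp: in_set_conv_nth)
    obtain v w i j where r: "v < n" "w < n" "i < m" "j < m" and te: "t = idx n m v w i j"
      using idx_decomp t by (metis corr_list_len)
    have "corr_list n m p ! t = p (Suc i) (Suc j) (Suc v) (Suc w)" using corr_list_nth[OF r] te by simp
    then show "entryok r" using rt pv(2)[OF r] entryok_rat by simp
  qed
  have c2: "lall (\<lambda>e. cnle1 (snd (prod_decode e))) T"
    unfolding lall_def T_def
  proof
    fix e assume "e \<in> set (list_decode (list_encode (map (\<lambda>g. prod_encode (word_code g, val g)) W)))"
    then obtain g where g: "g \<in> set W" and e: "e = prod_encode (word_code g, val g)" by auto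
    have "cmod (\<tau> g) \<le> 1" using at Wc[OF g] unfolding approx_trace_def by blast
    then show "cnle1 (snd (prod_decode e))" using e val[OF Wc[OF g]] by (simp add: cnle1_iff)
  qed
  have c3: "nall k (\<lambda>l. reqok (Ecf E) (\<lambda>l. req_code (R l)) T k n m (Suc l))"
    unfolding nall_def
  proof (intro allI impI)
    fix l assume l: "l < k"
    have "\<forall>g\<in>set (rw (Suc l)). tauT T g = \<tau> g"
    proof
      fix g assume g: "g \<in> set (rw (Suc l))"
      have "Suc l \<in> set [1..<Suc k]" using l by (simp del: upt_Suc)
      then have "g \<in> set (concat (map rw [1..<Suc k]))" using g by (rule in_concat_map)
      then have "g \<in> set W" unfolding W_def set_append by (rule UnI1)
      then show "tauT T g = \<tau> g" by (rule tT)
    qed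
    then have "req_relax k m (E n m) (tauT T) (R (Suc l)) = req_relax k m (E n m) \<tau> (R (Suc l))"
      unfolding rw_def by (rule req_relax_cong)
    moreover have "req_relax k m (E n m) \<tau> (R (Suc l))" using at l unfolding approx_trace_def by auto
    ultimately show "reqok (Ecf E) (\<lambda>l. req_code (R l)) T k n m (Suc l)" using reqok_sem[OF k1] by simp
  qed
  have c4: "nall n (\<lambda>v. nall n (\<lambda>w. nall m (\<lambda>i. nall m (\<lambda>j. adok (Ecf E) (Scf S) T k n m C v w i j))))"
    unfolding nall_def
  proof (intro allI impI)
    fix v w i j assume r: "v < n" "w < n" "i < m" "j < m"
    have "\<forall>g\<in>set (sw (Suc v) (Suc w) (Suc i) (Suc j)). tauT T g = \<tau> g"
    proof
      fix g assume g: "g \<in> set (sw (Suc v) (Suc w) (Suc i) (Suc j))"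
      have mem: "Suc v \<in> set [1..<Suc n]" "Suc w \<in> set [1..<Suc n]" "Suc i \<in> set [1..<Suc m]" "Suc j \<in> set [1..<Suc m]"
        using r by (simp_all del: upt_Suc)
      have g1: "g \<in> set (concat (map (\<lambda>j. sw (Suc v) (Suc w) (Suc i) j) [1..<Suc m]))"
        by (rule in_concat_map[where a="Suc j"]) (use mem g in auto)
      have g2: "g \<in> set (concat (map (\<lambda>i. concat (map (\<lambda>j. sw (Suc v) (Suc w) i j) [1..<Suc m])) [1..<Suc m]))"
        by (rule in_concat_map[where a="Suc i"]) (use mem g1 in auto)
      have g3: "g \<in> set (concat (map (\<lambda>w. concat (map (\<lambda>i. concat (map (\<lambda>j. sw (Suc v) w i j) [1..<Suc m])) [1..<Suc m])) [1..<Suc n]))"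
        by (rule in_concat_map[where a="Suc w"]) (use mem g2 in auto)
      have "g \<in> set (concat (map (\<lambda>v. concat (map (\<lambda>w. concat (map (\<lambda>i.
        concat (map (\<lambda>j. sw v w i j) [1..<Suc m])) [1..<Suc m])) [1..<Suc n])) [1..<Suc n]))"
        by (rule in_concat_map[where a="Suc v"]) (use mem g3 in auto)
      then have "g \<in> set W" unfolding W_def set_append by (rule UnI2)
      then show "tauT T g = \<tau> g" by (rule tT)
    qed
    then have "fgr_eval (tauT T) (qelt_val (E n m) (S (Suc v) (Suc w) (Suc i) (Suc j) k n m))
        = fgr_eval \<tau> (qelt_val (E n m) (S (Suc v) (Suc w) (Suc i) (Suc j) k n m))"
      unfolding sw_def by (intro fgr_eval_cong) simp
    moreover have "cmod (complex_of_real (of_rat (p (Suc i) (Suc j) (Suc v) (Suc w)))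
         - fgr_eval \<tau> (qelt_val (E n m) (S (Suc v) (Suc w) (Suc i) (Suc j) k n m))) < 1 / real k"
      using ad r unfolding adapted_def by simp
    ultimately show "adok (Ecf E) (Scf S) T k n m C v w i j"
      using adok_sem[OF k1 pv(1)[OF r]] by simp
  qed
  have c5: "clen x = 4" unfolding lx by (simp del: list_encode.simps)
  have c6: "clen C = n * n * m * m" unfolding C_def by (simp add: corr_list_len)
  have "Qx (Ecf E) (\<lambda>l. req_code (R l)) (Scf S) x T"
    unfolding Qx_def cx using c1 c2 c3 c4 c5 c6 n2 m2 k1 by simp
  then show ?thesis ..
qed

lemma computable_rc: "computable g \<Longrightarrow> rc 1 (\<lambda>ys. g (ys!0))"
  unfolding computable_def rc_def
proof (elim exE, intro exI allI impI)
  fix f and xs :: "nat list" assume f: "\<forall>x. evalr f [x] (g x)" and l: "length xs = 1"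
  then have "xs = [xs!0]" by (cases xs) auto
  then show "evalr f xs (g (xs!0))" using f by metis
qed

theorem lemma4p2:
  fixes E :: "nat \<Rightarrow> nat \<Rightarrow> nat \<Rightarrow> fword"
    and R :: "nat \<Rightarrow> req"
    and S :: "nat \<Rightarrow> nat \<Rightarrow> nat \<Rightarrow> nat \<Rightarrow> nat \<Rightarrow> nat \<Rightarrow> nat \<Rightarrow> qelt"
  assumes E_enum: "\<And>n m. 2 \<le> n \<Longrightarrow> 2 \<le> m \<Longrightarrow> range (E n m) = fp_carrier n m"
    and E_eff: "computable (\<lambda>c. case list_decode c of [n, m, l] \<Rightarrow> word_code (E n m l) | _ \<Rightarrow> 0)"
    and R_enum: "R ` {1..} = UNIV"
    and R_eff: "computable (\<lambda>l. req_code (R l))"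
    and S_eff: "computable (\<lambda>c. case list_decode c of
                   [v, w, i, j, k, n, m] \<Rightarrow> qelt_code (S v w i j k n m) | _ \<Rightarrow> 0)"
    and S_approx: "\<And>n m v w i j k. 2 \<le> n \<Longrightarrow> 2 \<le> m \<Longrightarrow> v \<in> {1..n} \<Longrightarrow> w \<in> {1..n}
                   \<Longrightarrow> i \<in> {1..m} \<Longrightarrow> j \<in> {1..m} \<Longrightarrow> 1 \<le> k \<Longrightarrow>
                   cstar_norm n m (fgr_diff (fgr_mult m (spec_proj m v i) (spec_proj m w j))
                                            (qelt_val (E n m) (S v w i j k n m))) < 1 / real k"
  shows "re_set (Xcodes E R S)"
proof -
  let ?Q = "Qx (Ecf E) (\<lambda>l. req_code (R l)) (Scf S)"
  have rcE: "rc 1 (\<lambda>ys. Ecf E (ys!0))" using computable_rc[OF E_eff] unfolding Ecf_def .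
  have rcR: "rc 1 (\<lambda>ys. req_code (R (ys!0)))" using computable_rc[OF R_eff] .
  have rcS: "rc 1 (\<lambda>ys. Scf S (ys!0))" using computable_rc[OF S_eff] unfolding Scf_def .
  have rpQ: "rp 2 (\<lambda>ys. ?Q (ys!0) (ys!1))" by (rule rp_Qx[OF rcE rcR rcS])
  have "rp 2 (\<lambda>ys. \<not> ?Q (ys!1) (ys!0))"
    by (rule rp_not, rule rp_comp2[OF rpQ]) (rule rc_proj; simp)+
  then obtain r where r: "\<And>xs. length xs = 2 \<Longrightarrow> evalr r xs (if \<not> ?Q (xs!1) (xs!0) then 1 else 0)"
    unfolding rp_def rc_def by blast
  have eq: "x \<in> Xcodes E R S \<longleftrightarrow> (\<exists>y. ?Q x y)" for x
    using sound complete[OF E_enum] by blast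
  show ?thesis unfolding re_set_def
  proof (rule exI[of _ "RMinim r"], intro allI iffI)
    fix x assume "x \<in> Xcodes E R S"
    then have ex: "\<exists>y. ?Q x y" using eq by blast
    define y0 where "y0 = (LEAST y. ?Q x y)"
    have q0: "?Q x y0" unfolding y0_def using ex by (rule LeastI_ex)
    have lt: "\<not> ?Q x z" if "z < y0" for z using that unfolding y0_def by (rule not_less_Least)
    have "evalr r [y0, x] 0" using r[of "[y0, x]"] q0 by simp
    moreover have "\<forall>z<y0. \<exists>v. evalr r (z # [x]) (Suc v)"
    proof (intro allI impI)
      fix z assume "z < y0"
      then have "evalr r [z, x] (Suc 0)" using r[of "[z, x]"] lt by simp
      then show "\<exists>v. evalr r (z # [x]) (Suc v)" by blast
    qed
    ultimately have "evalr (RMinim r) [x] y0" by (intro ev_minim) simp_all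
    then show "\<exists>y. evalr (RMinim r) [x] y" ..
  next
    fix x assume "\<exists>y. evalr (RMinim r) [x] y"
    then obtain y where "evalr (RMinim r) [x] y" by blast
    then have a: "evalr r [y, x] 0" by (rule ev_RMinimE) simp
    have b: "evalr r [y, x] (if \<not> ?Q x y then 1 else 0)" using r[of "[y, x]"] by simp
    have "(if \<not> ?Q x y then 1 else 0) = (0::nat)" using evalr_det[OF b a] .
    then have "?Q x y" by (simp split: if_splits)
    then show "x \<in> Xcodes E R S" using eq by blast
  qed
qed

end
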